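(* Let $(\mathbb{F},\sigma)$ be a difference field, $(\mathbb{F}(t),\sigma)$ a $\Pi\Sigma$-extension, $A\in\mathbb{F}(t)[\sigma]^{m\times n}$ and $b\in\mathbb{F}(t)^m$. Then there exist an integer $r$ (the rank of $A$), unimodular matrices $P\in\mathrm{GL}_m(\mathbb{F}(t)[\sigma,\sigma^{-1}])$ and $Q\in\mathrm{GL}_n(\mathbb{F}(t)[\sigma])$, and $\hat A\in\mathbb{F}(t)[\sigma]^{r\times r}$ such that $$PAQ=\begin{pmatrix}\hat A&0\\0&0\end{pmatrix},$$ and, writing $P(b)=\binom{b_1}{b_2}$ with $b_1\in\mathbb{F}(t)^r$, $b_2\in\mathbb{F}(t)^{m-r}$, the following hold: (i) $y\in\mathbb{F}(t)^n$ solves $A(y)=b$ if and only if $b_2=0$ and $Q^{-1}(y)=\binom{y_1}{y_2}$ with $y_1\in\mathbb{F}(t)^r$ satisfying $\hat A(y_1)=b_1$ and $y_2\in\mathbb{F}(t)^{n-r}$ arbitrary; (ii) there is $c\in\mathbb{F}[t]\setminus\{0\}$ such that $c\hat A$ has coefficient matrices in $\mathbb{F}[t]^{r\times r}$, $cb_1\in\mathbb{F}[t]^r$, and the system $(c\hat A)(y_1)=cb_1$ is fully regular. In particular every system of the form $A_\ell\sigma^\ell(y)+\dots+A_0y=b$ can be transformed into a related fully regular system, subject to the compatibility condition $b_2=0$.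
   Context: A difference field $(\mathbb{F},\sigma)$ is a field (containing $\mathbb{Q}$) with an automorphism $\sigma$; in a $\Pi\Sigma$-extension $(\mathbb{F}(t),\sigma)$, $\sigma$ extends to the rational function field with $\sigma(t)=t+\beta$ or $\sigma(t)=\alpha t$ ($\alpha,\beta\in\mathbb{F}\setminus\{0\}$) and no new constants. $\mathbb{F}(t)[\sigma]$ is the Ore polynomial ring: polynomials $\sum a_i\sigma^i$, $a_i\in\mathbb{F}(t)$, with multiplication determined by $\sigma a=\sigma(a)\sigma$; $\mathbb{F}(t)[\sigma,\sigma^{-1}]$ is its localisation at the powers of $\sigma$. An operator $\sum a_i\sigma^i$ acts on $\alpha\in\mathbb{F}(t)$ by $\sum a_i\sigma^i(\alpha)$; an operator matrix $L=(L_{ij})$ acts on a vector $\alpha$ by $L(\alpha)=(\sum_jL_{ij}(\alpha_j))_i$. A square matrix is unimodular if it has a two-sided inverse over the same ring. The rank of $A$ is the row rank of $A$ over $\mathbb{F}(t)[\sigma]$. A square system $\hat A(y)=\hat b$ with $\hat A=\sum_{i=0}^{\ell}\hat A_i\sigma^i$, $\hat A_i\in\mathbb{F}[t]^{r\times r}$, is head regular if $\det\hat A_\ell\ne0$, tail regular if $\det\hat A_0\ne0$, and fully regular if it is head regular and there exists $W\in\mathrm{GL}_r(\mathbb{F}(t)[\sigma,\sigma^{-1}])$ with $W\hat A\in\mathbb{F}(t)[\sigma]^{r\times r}$ such that $(W\hat A)(\tilde y)=W(\hat b)$ is tail regular. *)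

theory Defs
  imports "HOL-Computational_Algebra.Fraction_Field" "HOL-Computational_Algebra.Polynomial"
    "Jordan_Normal_Form.Determinant"
begin

text \<open>The base field F is a type 'a of class field_char_0; F(t) is the field of fractions
  of F[t], i.e. 'a poly fract.\<close>

definition embF :: "'a::field \<Rightarrow> 'a poly fract" where
  "embF c = Fract [:c:] 1"

definition embP :: "'a::field poly \<Rightarrow> 'a poly fract" where
  "embP p = Fract p 1"

definition tvar :: "'a::field poly fract" where
  "tvar = Fract [:0, 1:] 1"

definition is_automorphism :: "('k::field \<Rightarrow> 'k) \<Rightarrow> bool" where
  "is_automorphism s \<longleftrightarrow> bij s \<and> (\<forall>x y. s (x + y) = s x + s y) \<and>
     (\<forall>x y. s (x * y) = s x * s y) \<and> s 1 = 1"

definition difference_field :: "('a::field_char_0 \<Rightarrow> 'a) \<Rightarrow> bool" where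
  "difference_field s0 \<longleftrightarrow> is_automorphism s0"

definition PiSigma_ext :: "('a::field_char_0 \<Rightarrow> 'a) \<Rightarrow> ('a poly fract \<Rightarrow> 'a poly fract) \<Rightarrow> bool" where
  "PiSigma_ext s0 s \<longleftrightarrow> difference_field s0 \<and> is_automorphism s \<and>
     (\<forall>c. s (embF c) = embF (s0 c)) \<and>
     ((\<exists>\<beta>. \<beta> \<noteq> 0 \<and> s tvar = tvar + embF \<beta>) \<or> (\<exists>\<alpha>. \<alpha> \<noteq> 0 \<and> s tvar = embF \<alpha> * tvar)) \<and>
     (\<forall>f. s f = f \<longrightarrow> (\<exists>c. f = embF c))"

type_synonym 'k op = "int \<Rightarrow> 'k"
type_synonym 'k opmat = "nat \<Rightarrow> nat \<Rightarrow> 'k op"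

definition sigma_pow :: "('k \<Rightarrow> 'k) \<Rightarrow> int \<Rightarrow> 'k \<Rightarrow> 'k" where
  "sigma_pow s i = (if 0 \<le> i then s ^^ nat i else (inv_into UNIV s) ^^ nat (- i))"

definition op_supp :: "'k::zero op \<Rightarrow> int set" where
  "op_supp L = {i. L i \<noteq> 0}"

definition laurent_op :: "'k::zero op \<Rightarrow> bool" where
  "laurent_op L \<longleftrightarrow> finite (op_supp L)"

definition ore_op :: "'k::zero op \<Rightarrow> bool" where
  "ore_op L \<longleftrightarrow> laurent_op L \<and> (\<forall>i<0. L i = 0)"

definition op_zero :: "'k::zero op" where
  "op_zero = (\<lambda>_. 0)"

definition op_one :: "'k::{zero,one} op" where
  "op_one = (\<lambda>i. if i = 0 then 1 else 0)"

definition op_apply :: "('k::field \<Rightarrow> 'k) \<Rightarrow> 'k op \<Rightarrow> 'k \<Rightarrow> 'k" where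
  "op_apply s L f = (\<Sum>i\<in>op_supp L. L i * sigma_pow s i f)"

text \<open>Ore multiplication: \<open>(a \<sigma>^i)(b \<sigma>^j) = a \<sigma>^i(b) \<sigma>^(i+j)\<close>.\<close>
definition op_mult :: "('k::field \<Rightarrow> 'k) \<Rightarrow> 'k op \<Rightarrow> 'k op \<Rightarrow> 'k op" where
  "op_mult s L M = (\<lambda>k. \<Sum>i\<in>op_supp L. L i * sigma_pow s i (M (k - i)))"

definition mat_mult :: "('k::field \<Rightarrow> 'k) \<Rightarrow> 'k opmat \<Rightarrow> 'k opmat \<Rightarrow> nat \<Rightarrow> 'k opmat" where
  "mat_mult s A B n = (\<lambda>i k. (\<lambda>d. \<Sum>j<n. op_mult s (A i j) (B j k) d))"

definition mat_id :: "'k::field opmat" where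
  "mat_id = (\<lambda>i j. if i = j then op_one else op_zero)"

definition mat_apply :: "('k::field \<Rightarrow> 'k) \<Rightarrow> 'k opmat \<Rightarrow> nat \<Rightarrow> (nat \<Rightarrow> 'k) \<Rightarrow> (nat \<Rightarrow> 'k)" where
  "mat_apply s A n y = (\<lambda>i. \<Sum>j<n. op_apply s (A i j) (y j))"

definition laurent_mat :: "'k::zero opmat \<Rightarrow> nat \<Rightarrow> nat \<Rightarrow> bool" where
  "laurent_mat A m n \<longleftrightarrow> (\<forall>i<m. \<forall>j<n. laurent_op (A i j))"

definition ore_mat :: "'k::zero opmat \<Rightarrow> nat \<Rightarrow> nat \<Rightarrow> bool" where
  "ore_mat A m n \<longleftrightarrow> (\<forall>i<m. \<forall>j<n. ore_op (A i j))"

definition mat_eq :: "'k opmat \<Rightarrow> 'k opmat \<Rightarrow> nat \<Rightarrow> nat \<Rightarrow> bool" where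
  "mat_eq A B m n \<longleftrightarrow> (\<forall>i<m. \<forall>j<n. A i j = B i j)"

definition is_inverse :: "('k::field \<Rightarrow> 'k) \<Rightarrow> 'k opmat \<Rightarrow> 'k opmat \<Rightarrow> nat \<Rightarrow> bool" where
  "is_inverse s P P' m \<longleftrightarrow> mat_eq (mat_mult s P P' m) mat_id m m \<and> mat_eq (mat_mult s P' P m) mat_id m m"

definition unimodular_laurent :: "('k::field \<Rightarrow> 'k) \<Rightarrow> 'k opmat \<Rightarrow> nat \<Rightarrow> bool" where
  "unimodular_laurent s P m \<longleftrightarrow> laurent_mat P m m \<and> (\<exists>P'. laurent_mat P' m m \<and> is_inverse s P P' m)"

definition left_lin_indep :: "('k::field \<Rightarrow> 'k) \<Rightarrow> 'k opmat \<Rightarrow> nat set \<Rightarrow> nat \<Rightarrow> bool" where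
  "left_lin_indep s A S n \<longleftrightarrow>
     (\<forall>u. (\<forall>i\<in>S. ore_op (u i)) \<and>
          (\<forall>j<n. (\<lambda>d. \<Sum>i\<in>S. op_mult s (u i) (A i j) d) = op_zero)
          \<longrightarrow> (\<forall>i\<in>S. u i = op_zero))"

definition op_rank :: "('k::field \<Rightarrow> 'k) \<Rightarrow> 'k opmat \<Rightarrow> nat \<Rightarrow> nat \<Rightarrow> nat" where
  "op_rank s A m n = Max {card S | S. S \<subseteq> {..<m} \<and> left_lin_indep s A S n}"

definition coeff_mat :: "'k opmat \<Rightarrow> nat \<Rightarrow> int \<Rightarrow> 'k mat" where
  "coeff_mat A r i = mat r r (\<lambda>(j, k). A j k i)"

definition op_mat_order :: "'k::zero opmat \<Rightarrow> nat \<Rightarrow> int" where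
  "op_mat_order A r = Max ({i. \<exists>j<r. \<exists>k<r. A j k i \<noteq> 0} \<union> {0})"

definition poly_coeff_mat :: "'a::field poly fract opmat \<Rightarrow> nat \<Rightarrow> bool" where
  "poly_coeff_mat A r \<longleftrightarrow> ore_mat A r r \<and> (\<forall>j<r. \<forall>k<r. \<forall>i. A j k i \<in> range embP)"

definition head_regular :: "'k::comm_ring_1 opmat \<Rightarrow> nat \<Rightarrow> bool" where
  "head_regular A r \<longleftrightarrow> det (coeff_mat A r (op_mat_order A r)) \<noteq> 0"

definition tail_regular :: "'k::comm_ring_1 opmat \<Rightarrow> nat \<Rightarrow> bool" where
  "tail_regular A r \<longleftrightarrow> det (coeff_mat A r 0) \<noteq> 0"

text \<open>The system A(y) = b (A with coefficient matrices over F[t]) is fully regular.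
  The right-hand side plays no role in the regularity notions.\<close>
definition fully_regular ::
  "('a::field poly fract \<Rightarrow> 'a poly fract) \<Rightarrow> 'a poly fract opmat \<Rightarrow> (nat \<Rightarrow> 'a poly fract) \<Rightarrow> nat \<Rightarrow> bool" where
  "fully_regular s A b r \<longleftrightarrow> poly_coeff_mat A r \<and> head_regular A r \<and>
     (\<exists>W. unimodular_laurent s W r \<and> ore_mat (mat_mult s W A r) r r \<and>
          tail_regular (mat_mult s W A r) r)"

end

theory Submission
  imports Defs
begin


section \<open>Automorphisms\<close>

lemma aut_bij: "is_automorphism f \<Longrightarrow> bij f" by (simp add: is_automorphism_def)
lemma aut_add: "is_automorphism f \<Longrightarrow> f (x + y) = f x + f y" by (simp add: is_automorphism_def)
lemma aut_mult: "is_automorphism f \<Longrightarrow> f (x * y) = f x * f y" by (simp add: is_automorphism_def)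
lemma aut_one: "is_automorphism f \<Longrightarrow> f 1 = 1" by (simp add: is_automorphism_def)
lemma aut_zero: "is_automorphism (f::'k::field\<Rightarrow>'k) \<Longrightarrow> f 0 = 0"
proof -
  assume a: "is_automorphism f"
  have "f 0 + f 0 = f 0 + 0" using aut_add[OF a, of 0 0] by simp
  then show ?thesis by (rule add_left_imp_eq)
qed
lemma aut_uminus: "is_automorphism (f::'k::field\<Rightarrow>'k) \<Longrightarrow> f (- x) = - f x"
  using aut_add[of f x "-x"] aut_zero[of f] by (simp add: eq_neg_iff_add_eq_0 add.commute)
lemma aut_diff: "is_automorphism (f::'k::field\<Rightarrow>'k) \<Longrightarrow> f (x - y) = f x - f y"
  using aut_add[of f x "-y"] aut_uminus[of f y] by simp
lemma aut_sum: "is_automorphism (f::'k::field\<Rightarrow>'k) \<Longrightarrow> f (\<Sum>i\<in>I. g i) = (\<Sum>i\<in>I. f (g i))"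
  by (induction I rule: infinite_finite_induct) (auto simp: aut_zero aut_add)
lemma aut_eq0: "is_automorphism (f::'k::field\<Rightarrow>'k) \<Longrightarrow> f x = 0 \<longleftrightarrow> x = 0"
  by (metis aut_zero aut_bij bij_is_inj injD)

lemma aut_inv: assumes "is_automorphism f" shows "is_automorphism (inv_into UNIV f)"
proof -
  have b: "bij f" using assms aut_bij by blast
  have fi: "\<And>x. f (inv_into UNIV f x) = x" using b by (simp add: bij_is_surj surj_f_inv_f)
  have if': "\<And>x. inv_into UNIV f (f x) = x" using b by (simp add: bij_is_inj)
  show ?thesis unfolding is_automorphism_def
  proof (intro conjI allI)
    show "bij (inv_into UNIV f)" using b by (simp add: bij_imp_bij_inv)
    fix x y
    have "f (inv_into UNIV f x + inv_into UNIV f y) = f (inv_into UNIV f (x + y))"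
      by (simp add: aut_add[OF assms] fi)
    then show "inv_into UNIV f (x + y) = inv_into UNIV f x + inv_into UNIV f y"
      using b by (metis bij_is_inj injD)
    have "f (inv_into UNIV f x * inv_into UNIV f y) = f (inv_into UNIV f (x * y))"
      by (simp add: aut_mult[OF assms] fi)
    then show "inv_into UNIV f (x * y) = inv_into UNIV f x * inv_into UNIV f y"
      using b by (metis bij_is_inj injD)
    show "inv_into UNIV f 1 = 1" by (metis aut_one[OF assms] if')
  qed
qed

lemma aut_pow: assumes "is_automorphism f" shows "is_automorphism (f ^^ n)"
proof (induction n)
  case 0 then show ?case by (simp add: is_automorphism_def bij_def inj_on_def)
next
  case (Suc n)
  then show ?case using assms unfolding is_automorphism_def
    by (auto simp: bij_comp)
qed

lemma aut_sp: "is_automorphism s \<Longrightarrow> is_automorphism (sigma_pow s i)"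
  by (simp add: sigma_pow_def aut_pow aut_inv)

lemma sp_0[simp]: "sigma_pow s 0 = id" by (simp add: sigma_pow_def)

lemma sp_succ: assumes "is_automorphism s" shows "sigma_pow s (i + 1) x = s (sigma_pow s i x)"
proof -
  have b: "bij s" using assms aut_bij by blast
  have fi: "\<And>x. s (inv_into UNIV s x) = x" using b by (simp add: bij_is_surj surj_f_inv_f)
  show ?thesis
  proof (cases "0 \<le> i")
    case True
    then have "nat (i+1) = Suc (nat i)" by simp
    with True show ?thesis by (simp add: sigma_pow_def)
  next
    case False
    then have "nat (-i) = Suc (nat (-(i+1)))" by simp
    with False show ?thesis
      by (cases "i = -1") (auto simp: sigma_pow_def fi)
  qed
qed

lemma sp_comp: assumes "is_automorphism s" shows "sigma_pow s j (sigma_pow s i x) = sigma_pow s (j + i) x"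
proof (induction j rule: int_induct[where k=0])
  case base then show ?case by simp
next
  case (step1 j)
  then show ?case using sp_succ[OF assms, of j] sp_succ[OF assms, of "j+i"]
    by (simp add: add.commute add.left_commute)
next
  case (step2 j)
  have b: "bij s" using assms aut_bij by blast
  have "s (sigma_pow s (j - 1) y) = sigma_pow s j y" for y
    using sp_succ[OF assms, of "j-1" y] by simp
  then have e: "sigma_pow s (j - 1) y = inv_into UNIV s (sigma_pow s j y)" for y
    by (metis b bij_is_inj inv_f_f)
  have "s (sigma_pow s (j - 1 + i) x) = sigma_pow s (j + i) x"
    using sp_succ[OF assms, of "j - 1 + i" x] by (simp add: algebra_simps)
  then have e2: "sigma_pow s (j - 1 + i) x = inv_into UNIV s (sigma_pow s (j + i) x)"
    by (metis b bij_is_inj inv_f_f)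
  show ?case using step2 e[of "sigma_pow s i x"] e2 by simp
qed

section \<open>Operators\<close>

definition oadd :: "'k::ab_group_add op \<Rightarrow> 'k op \<Rightarrow> 'k op" where "oadd L M = (\<lambda>d. L d + M d)"
definition oneg :: "'k::ab_group_add op \<Rightarrow> 'k op" where "oneg L = (\<lambda>d. - L d)"
definition osum :: "('i \<Rightarrow> 'k::ab_group_add op) \<Rightarrow> 'i set \<Rightarrow> 'k op" where "osum F J = (\<lambda>d. \<Sum>j\<in>J. F j d)"
definition mono :: "'k::zero \<Rightarrow> int \<Rightarrow> 'k op" where "mono c k = (\<lambda>i. if i = k then c else 0)"
definition msum :: "int set \<Rightarrow> int set \<Rightarrow> int set" where "msum U V = (\<lambda>(a,b). a + b) ` (U \<times> V)"

lemma finite_msum: "finite U \<Longrightarrow> finite V \<Longrightarrow> finite (msum U V)"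
  by (simp add: msum_def)
lemma in_msum: "a \<in> U \<Longrightarrow> b \<in> V \<Longrightarrow> a + b \<in> msum U V"
  by (force simp: msum_def)

lemma laurent_finite: "laurent_op L \<Longrightarrow> finite (op_supp L)" by (simp add: laurent_op_def)
lemma ore_laurent: "ore_op L \<Longrightarrow> laurent_op L" by (simp add: ore_op_def)
lemma ore_neg: "ore_op L \<Longrightarrow> i < 0 \<Longrightarrow> L i = 0" by (simp add: ore_op_def)
lemma supp_iff: "i \<in> op_supp L \<longleftrightarrow> L i \<noteq> 0" by (simp add: op_supp_def)

lemma laurent_zero[simp]: "laurent_op op_zero" by (simp add: laurent_op_def op_supp_def op_zero_def)
lemma ore_zero[simp]: "ore_op op_zero" by (simp add: ore_op_def) (simp add: op_zero_def)
lemma laurent_one[simp]: "laurent_op (op_one::'k::{zero,one} op)"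
proof -
  have "op_supp (op_one::'k op) \<subseteq> {0}" by (auto simp: op_supp_def op_one_def)
  then show ?thesis by (simp add: laurent_op_def finite_subset)
qed
lemma ore_one[simp]: "ore_op (op_one::'k::{zero,one} op)" by (simp add: ore_op_def) (simp add: op_one_def)
lemma laurent_mono[simp]: "laurent_op (mono c k)"
proof -
  have "op_supp (mono c k) \<subseteq> {k}" by (auto simp: op_supp_def mono_def)
  then show ?thesis by (simp add: laurent_op_def finite_subset)
qed
lemma ore_mono: "0 \<le> k \<Longrightarrow> ore_op (mono c k)" by (simp add: ore_op_def) (simp add: mono_def)

lemma supp_oadd: "op_supp (oadd L M) \<subseteq> op_supp L \<union> op_supp M" by (auto simp: op_supp_def oadd_def)
lemma laurent_oadd[simp]: "laurent_op L \<Longrightarrow> laurent_op M \<Longrightarrow> laurent_op (oadd L M)"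
  unfolding laurent_op_def by (rule finite_subset[OF supp_oadd]) simp
lemma ore_oadd[simp]: "ore_op L \<Longrightarrow> ore_op M \<Longrightarrow> ore_op (oadd L M)"
  using laurent_oadd[of L M] unfolding ore_op_def by (simp add: oadd_def)
lemma laurent_oneg[simp]: "laurent_op L \<Longrightarrow> laurent_op (oneg L)"
  by (simp add: laurent_op_def op_supp_def oneg_def)
lemma ore_oneg[simp]: "ore_op L \<Longrightarrow> ore_op (oneg L)"
  by (simp add: ore_op_def oneg_def laurent_op_def op_supp_def)
lemma supp_osum: "op_supp (osum F J) \<subseteq> (\<Union>j\<in>J. op_supp (F j))"
proof
  fix d assume "d \<in> op_supp (osum F J)"
  then have "(\<Sum>j\<in>J. F j d) \<noteq> 0" by (simp add: op_supp_def osum_def)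
  then obtain j where "j \<in> J" "F j d \<noteq> 0" by (meson sum.not_neutral_contains_not_neutral)
  then show "d \<in> (\<Union>j\<in>J. op_supp (F j))" by (auto simp: op_supp_def)
qed
lemma laurent_osum[simp]: "finite J \<Longrightarrow> (\<And>j. j \<in> J \<Longrightarrow> laurent_op (F j)) \<Longrightarrow> laurent_op (osum F J)"
  unfolding laurent_op_def by (rule finite_subset[OF supp_osum]) auto
lemma ore_osum[simp]: "finite J \<Longrightarrow> (\<And>j. j \<in> J \<Longrightarrow> ore_op (F j)) \<Longrightarrow> ore_op (osum F J)"
  using laurent_osum[of J F] unfolding ore_op_def by (simp add: osum_def)

locale aut =
  fixes s :: "'k::field \<Rightarrow> 'k"
  assumes aut: "is_automorphism s"
begin

abbreviation sp where "sp \<equiv> sigma_pow s"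

lemma sp_add: "sp i (x + y) = sp i x + sp i y" using aut_add[OF aut_sp[OF aut]] .
lemma sp_mult: "sp i (x * y) = sp i x * sp i y" using aut_mult[OF aut_sp[OF aut]] .
lemma sp_zero[simp]: "sp i 0 = 0" using aut_zero[OF aut_sp[OF aut]] .
lemma sp_one[simp]: "sp i 1 = 1" using aut_one[OF aut_sp[OF aut]] .
lemma sp_uminus: "sp i (- x) = - sp i x" using aut_uminus[OF aut_sp[OF aut]] .
lemma sp_diff: "sp i (x - y) = sp i x - sp i y" using aut_diff[OF aut_sp[OF aut]] .
lemma sp_sum: "sp i (\<Sum>j\<in>J. g j) = (\<Sum>j\<in>J. sp i (g j))" using aut_sum[OF aut_sp[OF aut]] .
lemma sp_eq0[simp]: "sp i x = 0 \<longleftrightarrow> x = 0" using aut_eq0[OF aut_sp[OF aut]] .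
lemma sp_sp: "sp j (sp i x) = sp (j + i) x" using sp_comp[OF aut] .
lemma sp_divide: "sp i (x / y) = sp i x / sp i y"
proof (cases "y = 0")
  case True then show ?thesis by simp
next
  case False
  have "sp i (x / y) * sp i y = sp i x" by (metis False sp_mult nonzero_divide_eq_eq)
  then show ?thesis using False by (simp add: nonzero_eq_divide_eq)
qed

lemma op_mult_sup:
  assumes "finite U" "op_supp L \<subseteq> U"
  shows "op_mult s L M k = (\<Sum>i\<in>U. L i * sp i (M (k - i)))"
  unfolding op_mult_def
  by (rule sum.mono_neutral_left) (use assms in \<open>auto simp: op_supp_def\<close>)

lemma op_apply_sup:
  assumes "finite U" "op_supp L \<subseteq> U"
  shows "op_apply s L f = (\<Sum>i\<in>U. L i * sp i f)"
  unfolding op_apply_def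
  by (rule sum.mono_neutral_left) (use assms in \<open>auto simp: op_supp_def\<close>)

lemma supp_mult: "op_supp (op_mult s L M) \<subseteq> msum (op_supp L) (op_supp M)"
proof
  fix k assume "k \<in> op_supp (op_mult s L M)"
  then have "(\<Sum>i\<in>op_supp L. L i * sp i (M (k - i))) \<noteq> 0" by (simp add: op_supp_def op_mult_def)
  then obtain i where i: "i \<in> op_supp L" "L i * sp i (M (k - i)) \<noteq> 0"
    by (meson sum.not_neutral_contains_not_neutral)
  then have "k - i \<in> op_supp M" by (auto simp: op_supp_def)
  then show "k \<in> msum (op_supp L) (op_supp M)" using in_msum[OF i(1)] by fastforce
qed

lemma laurent_mult[simp]: "laurent_op L \<Longrightarrow> laurent_op M \<Longrightarrow> laurent_op (op_mult s L M)"
  by (meson finite_msum finite_subset laurent_op_def supp_mult)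

lemma ore_mult[simp]: assumes "ore_op L" "ore_op M" shows "ore_op (op_mult s L M)"
proof -
  have "op_mult s L M k = 0" if "k < 0" for k
    unfolding op_mult_def
  proof (rule sum.neutral, clarify)
    fix i assume "i \<in> op_supp L"
    then have "0 \<le> i" using assms(1) by (metis linorder_not_le ore_neg supp_iff)
    then show "L i * sp i (M (k - i)) = 0" using assms(2) that by (simp add: ore_neg)
  qed
  then show ?thesis using assms by (simp add: ore_op_def)
qed

lemma conv:
  assumes U: "finite U" "op_supp L \<subseteq> U" and V: "finite V" "op_supp M \<subseteq> V"
    and H: "finite H" "msum U V \<subseteq> H"
  shows "(\<Sum>h\<in>H. (\<Sum>i\<in>U. L i * sp i (M (h - i))) * G h)
       = (\<Sum>i\<in>U. \<Sum>j\<in>V. L i * sp i (M j) * G (i + j))"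
proof -
  have "(\<Sum>h\<in>H. (\<Sum>i\<in>U. L i * sp i (M (h - i))) * G h)
      = (\<Sum>h\<in>H. \<Sum>i\<in>U. L i * sp i (M (h - i)) * G h)" by (simp add: sum_distrib_right)
  also have "\<dots> = (\<Sum>i\<in>U. \<Sum>h\<in>H. L i * sp i (M (h - i)) * G h)" by (rule sum.swap)
  also have "\<dots> = (\<Sum>i\<in>U. \<Sum>j\<in>V. L i * sp i (M j) * G (i + j))"
  proof (rule sum.cong[OF refl])
    fix i assume i: "i \<in> U"
    have sub: "(\<lambda>j. i + j) ` V \<subseteq> H" using H(2) i in_msum by blast
    have "(\<Sum>h\<in>H. L i * sp i (M (h - i)) * G h) = (\<Sum>h\<in>(\<lambda>j. i + j) ` V. L i * sp i (M (h - i)) * G h)"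
    proof (rule sum.mono_neutral_right[OF H(1) sub], clarify)
      fix h assume "h \<in> H" "h \<notin> (\<lambda>j. i + j) ` V"
      then have "h - i \<notin> V" by force
      then have "M (h - i) = 0" using V(2) by (auto simp: op_supp_def)
      then show "L i * sp i (M (h - i)) * G h = 0" by simp
    qed
    also have "\<dots> = (\<Sum>j\<in>V. L i * sp i (M j) * G (i + j))"
      by (subst sum.reindex) (auto simp: inj_on_def)
    finally show "(\<Sum>h\<in>H. L i * sp i (M (h - i)) * G h) = (\<Sum>j\<in>V. L i * sp i (M j) * G (i + j))" .
  qed
  finally show ?thesis .
qed

lemma op_mult_assoc:
  assumes "laurent_op L" "laurent_op M"
  shows "op_mult s (op_mult s L M) N = op_mult s L (op_mult s M N)"
proof
  fix k
  let ?U = "op_supp L" and ?V = "op_supp M"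
  have fU: "finite ?U" and fV: "finite ?V" using assms by (auto simp: laurent_op_def)
  have fH: "finite (msum ?U ?V)" using fU fV finite_msum by blast
  have "op_mult s (op_mult s L M) N k = (\<Sum>h\<in>msum ?U ?V. op_mult s L M h * sp h (N (k - h)))"
    by (rule op_mult_sup[OF fH supp_mult])
  also have "\<dots> = (\<Sum>h\<in>msum ?U ?V. (\<Sum>i\<in>?U. L i * sp i (M (h - i))) * sp h (N (k - h)))"
    by (simp add: op_mult_def)
  also have "\<dots> = (\<Sum>i\<in>?U. \<Sum>j\<in>?V. L i * sp i (M j) * sp (i + j) (N (k - (i + j))))"
    by (rule conv[OF fU order.refl fV order.refl fH order.refl])
  also have "\<dots> = (\<Sum>i\<in>?U. L i * sp i (\<Sum>j\<in>?V. M j * sp j (N (k - (i + j)))))"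
    by (simp add: sp_sum sp_mult sp_sp sum_distrib_left mult.assoc)
  also have "\<dots> = op_mult s L (op_mult s M N) k"
    by (simp only: op_mult_def diff_diff_eq)
  finally show "op_mult s (op_mult s L M) N k = op_mult s L (op_mult s M N) k" .
qed

lemma op_apply_mult:
  assumes "laurent_op L" "laurent_op M"
  shows "op_apply s (op_mult s L M) f = op_apply s L (op_apply s M f)"
proof -
  let ?U = "op_supp L" and ?V = "op_supp M"
  have fU: "finite ?U" and fV: "finite ?V" using assms by (auto simp: laurent_op_def)
  have fH: "finite (msum ?U ?V)" using fU fV finite_msum by blast
  have "op_apply s (op_mult s L M) f = (\<Sum>h\<in>msum ?U ?V. op_mult s L M h * sp h f)"
    by (rule op_apply_sup[OF fH supp_mult])
  also have "\<dots> = (\<Sum>h\<in>msum ?U ?V. (\<Sum>i\<in>?U. L i * sp i (M (h - i))) * sp h f)"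
    by (simp add: op_mult_def)
  also have "\<dots> = (\<Sum>i\<in>?U. \<Sum>j\<in>?V. L i * sp i (M j) * sp (i + j) f)"
    by (rule conv[OF fU order.refl fV order.refl fH order.refl])
  also have "\<dots> = (\<Sum>i\<in>?U. L i * sp i (\<Sum>j\<in>?V. M j * sp j f))"
    by (simp add: sp_sum sp_mult sp_sp sum_distrib_left mult.assoc)
  also have "\<dots> = op_apply s L (op_apply s M f)"
    by (simp only: op_apply_def)
  finally show ?thesis .
qed

end




definition deg :: "'k::zero op \<Rightarrow> int" where "deg L = Max (op_supp L)"

lemma nonzero_supp: "L \<noteq> op_zero \<Longrightarrow> op_supp L \<noteq> {}"
  by (auto simp: op_supp_def op_zero_def)

lemma deg_props:
  assumes "laurent_op L" "L \<noteq> op_zero"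
  shows "L (deg L) \<noteq> 0" "\<And>i. L i \<noteq> 0 \<Longrightarrow> i \<le> deg L"
proof -
  have f: "finite (op_supp L)" using assms(1) by (simp add: laurent_op_def)
  have ne: "op_supp L \<noteq> {}" using nonzero_supp[OF assms(2)] .
  show "L (deg L) \<noteq> 0" using Max_in[OF f ne] by (simp add: deg_def op_supp_def)
  show "\<And>i. L i \<noteq> 0 \<Longrightarrow> i \<le> deg L" using Max_ge[OF f] by (simp add: deg_def op_supp_def)
qed

lemma deg_unique:
  assumes "laurent_op L" "L d \<noteq> 0" "\<And>i. i > d \<Longrightarrow> L i = 0"
  shows "deg L = d"
proof -
  have nz: "L \<noteq> op_zero" using assms(2) by (auto simp: op_zero_def)
  show ?thesis using deg_props[OF assms(1) nz] assms(2,3)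
    by (meson antisym_conv2 not_le)
qed

lemma ore_deg_nonneg: "ore_op L \<Longrightarrow> L \<noteq> op_zero \<Longrightarrow> 0 \<le> deg L"
  by (metis deg_props(1) ore_laurent ore_neg not_le)

lemma op_zero_apply[simp]: "op_zero d = 0" by (simp add: op_zero_def)
lemma oadd_apply[simp]: "oadd L M d = L d + M d" by (simp add: oadd_def)
lemma oneg_apply[simp]: "oneg L d = - L d" by (simp add: oneg_def)
lemma osum_apply[simp]: "osum F J d = (\<Sum>j\<in>J. F j d)" by (simp add: osum_def)
lemma mono_apply: "mono c k d = (if d = k then c else 0)" by (simp add: mono_def)
lemma op_one_apply: "op_one d = (if d = 0 then 1 else 0)" by (simp add: op_one_def)

lemma one_nz[simp]: "(op_one::'k::{zero_neq_one} op) \<noteq> op_zero"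
  by (auto simp: op_one_def op_zero_def fun_eq_iff)

lemma op_eqI: "(\<And>d. L d = M d) \<Longrightarrow> L = M" by (rule ext)

context aut begin

lemma op_mult_zero_left[simp]: "op_mult s op_zero M = op_zero"
  by (simp add: op_mult_def op_supp_def op_zero_def)
lemma op_mult_zero_right[simp]: "op_mult s L op_zero = op_zero"
  by (simp add: op_mult_def op_zero_def)

lemma op_mult_one_left[simp]: "op_mult s op_one M = M"
proof
  fix k
  have "op_supp (op_one::'k op) \<subseteq> {0}" by (auto simp: op_supp_def op_one_def)
  then show "op_mult s op_one M k = M k" by (subst op_mult_sup[of "{0}"]) (auto simp: op_one_def)
qed

lemma op_mult_mono_left: "op_mult s (mono c j) M = (\<lambda>d. c * sp j (M (d - j)))"
proof
  fix k
  have "op_supp (mono c j) \<subseteq> {j}" by (auto simp: op_supp_def mono_def)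
  then show "op_mult s (mono c j) M k = c * sp j (M (k - j))" by (subst op_mult_sup[of "{j}"]) (auto simp: mono_def)
qed

lemma op_mult_one_right:
  assumes "laurent_op L" shows "op_mult s L op_one = L"
proof
  fix k
  have f: "finite (insert k (op_supp L))" using assms by (simp add: laurent_op_def)
  have "op_mult s L op_one k = (\<Sum>i\<in>insert k (op_supp L). L i * sp i (op_one (k - i)))"
    by (rule op_mult_sup[OF f]) auto
  also have "\<dots> = (\<Sum>i\<in>insert k (op_supp L). if i = k then L i else 0)"
    by (rule sum.cong) (auto simp: op_one_def)
  also have "\<dots> = L k" using f by (simp add: sum.delta')
  finally show "op_mult s L op_one k = L k" .
qed

lemma op_mult_mono_right:
  assumes "laurent_op L" shows "op_mult s L (mono c j) = (\<lambda>d. L (d - j) * sp (d - j) c)"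
proof
  fix k
  have f: "finite (insert (k - j) (op_supp L))" using assms by (simp add: laurent_op_def)
  have "op_mult s L (mono c j) k = (\<Sum>i\<in>insert (k - j) (op_supp L). L i * sp i (mono c j (k - i)))"
    by (rule op_mult_sup[OF f]) auto
  also have "\<dots> = (\<Sum>i\<in>insert (k - j) (op_supp L). if i = k - j then L i * sp i c else 0)"
    by (rule sum.cong) (auto simp: mono_def)
  also have "\<dots> = L (k - j) * sp (k - j) c" using f by (simp add: sum.delta')
  finally show "op_mult s L (mono c j) k = L (k - j) * sp (k - j) c" .
qed

lemma op_mult_oadd_right: "op_mult s L (oadd M N) = oadd (op_mult s L M) (op_mult s L N)"
  by (rule ext) (simp add: op_mult_def oadd_def sp_add distrib_left sum.distrib)

lemma op_mult_oadd_left: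
  assumes "laurent_op L" "laurent_op M"
  shows "op_mult s (oadd L M) N = oadd (op_mult s L N) (op_mult s M N)"
proof
  fix k
  let ?U = "op_supp L \<union> op_supp M"
  have f: "finite ?U" using assms by (simp add: laurent_op_def)
  have "op_mult s (oadd L M) N k = (\<Sum>i\<in>?U. (L i + M i) * sp i (N (k - i)))"
    using op_mult_sup[OF f supp_oadd] by simp
  also have "\<dots> = (\<Sum>i\<in>?U. L i * sp i (N (k - i))) + (\<Sum>i\<in>?U. M i * sp i (N (k - i)))"
    by (simp add: distrib_right sum.distrib)
  also have "\<dots> = op_mult s L N k + op_mult s M N k"
    using op_mult_sup[OF f, of L] op_mult_sup[OF f, of M] by auto
  finally show "op_mult s (oadd L M) N k = oadd (op_mult s L N) (op_mult s M N) k" by simp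
qed

lemma supp_oneg: "op_supp (oneg L) = op_supp L" by (simp add: op_supp_def oneg_def)

lemma op_mult_oneg_left: "op_mult s (oneg L) M = oneg (op_mult s L M)"
  by (rule ext) (simp add: op_mult_def supp_oneg sum_negf)

lemma op_mult_oneg_right: "op_mult s L (oneg M) = oneg (op_mult s L M)"
  by (rule ext) (simp add: op_mult_def sp_uminus sum_negf)

lemma op_mult_osum_right: "op_mult s L (osum F J) = osum (\<lambda>j. op_mult s L (F j)) J"
proof
  fix k
  have "op_mult s L (osum F J) k = (\<Sum>i\<in>op_supp L. \<Sum>j\<in>J. L i * sp i (F j (k - i)))"
    by (simp add: op_mult_def sp_sum sum_distrib_left)
  also have "\<dots> = (\<Sum>j\<in>J. \<Sum>i\<in>op_supp L. L i * sp i (F j (k - i)))" by (rule sum.swap)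
  finally show "op_mult s L (osum F J) k = osum (\<lambda>j. op_mult s L (F j)) J k"
    by (simp add: op_mult_def)
qed

lemma op_mult_osum_left:
  assumes "finite J" "\<And>j. j \<in> J \<Longrightarrow> laurent_op (F j)"
  shows "op_mult s (osum F J) M = osum (\<lambda>j. op_mult s (F j) M) J"
proof
  fix k
  let ?U = "\<Union>j\<in>J. op_supp (F j)"
  have f: "finite ?U" using assms by (simp add: laurent_op_def)
  have "op_mult s (osum F J) M k = (\<Sum>i\<in>?U. (\<Sum>j\<in>J. F j i) * sp i (M (k - i)))"
    using op_mult_sup[OF f supp_osum] by simp
  also have "\<dots> = (\<Sum>j\<in>J. \<Sum>i\<in>?U. F j i * sp i (M (k - i)))"
    by (simp add: sum_distrib_right sum.swap[of _ ?U])
  also have "\<dots> = (\<Sum>j\<in>J. op_mult s (F j) M k)"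
    by (rule sum.cong[OF refl], rule op_mult_sup[symmetric, OF f]) auto
  finally show "op_mult s (osum F J) M k = osum (\<lambda>j. op_mult s (F j) M) J k" by simp
qed

lemma op_apply_zero[simp]: "op_apply s op_zero f = 0"
  by (simp add: op_apply_def op_supp_def op_zero_def)

lemma op_apply_one[simp]: "op_apply s op_one f = f"
proof -
  have "op_supp (op_one::'k op) \<subseteq> {0}" by (auto simp: op_supp_def op_one_def)
  then show ?thesis by (subst op_apply_sup[of "{0}"]) (auto simp: op_one_def)
qed

lemma op_apply_osum:
  assumes "finite J" "\<And>j. j \<in> J \<Longrightarrow> laurent_op (F j)"
  shows "op_apply s (osum F J) f = (\<Sum>j\<in>J. op_apply s (F j) f)"
proof -
  let ?U = "\<Union>j\<in>J. op_supp (F j)"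
  have fin: "finite ?U" using assms by (simp add: laurent_op_def)
  have "op_apply s (osum F J) f = (\<Sum>i\<in>?U. (\<Sum>j\<in>J. F j i) * sp i f)"
    using op_apply_sup[OF fin supp_osum] by simp
  also have "\<dots> = (\<Sum>j\<in>J. \<Sum>i\<in>?U. F j i * sp i f)"
    by (simp add: sum_distrib_right sum.swap[of _ ?U])
  also have "\<dots> = (\<Sum>j\<in>J. op_apply s (F j) f)"
    by (rule sum.cong[OF refl], rule op_apply_sup[symmetric, OF fin]) auto
  finally show ?thesis .
qed

lemma op_apply_sum_right: "op_apply s L (\<Sum>j\<in>J. g j) = (\<Sum>j\<in>J. op_apply s L (g j))"
  by (simp add: op_apply_def sp_sum sum_distrib_left sum.swap[of _ "op_supp L"])

lemma op_apply_zero_right[simp]: "op_apply s L 0 = 0"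
  by (simp add: op_apply_def)

lemma mult_top:
  assumes "laurent_op L" "laurent_op M" "L \<noteq> op_zero" "M \<noteq> op_zero"
  shows "op_mult s L M (deg L + deg M) = L (deg L) * sp (deg L) (M (deg M))"
    and "\<And>k. k > deg L + deg M \<Longrightarrow> op_mult s L M k = 0"
proof -
  have f: "finite (op_supp L)" using assms(1) by (simp add: laurent_op_def)
  have dL: "\<And>i. i \<in> op_supp L \<Longrightarrow> i \<le> deg L" using deg_props(2)[OF assms(1,3)] by (simp add: op_supp_def)
  have dM: "\<And>i. M i \<noteq> 0 \<Longrightarrow> i \<le> deg M" using deg_props(2)[OF assms(2,4)] .
  have inL: "deg L \<in> op_supp L" using deg_props(1)[OF assms(1,3)] by (simp add: op_supp_def)
  have "op_mult s L M (deg L + deg M) = (\<Sum>i\<in>op_supp L. if i = deg L then L i * sp i (M (deg M)) else 0)"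
    unfolding op_mult_def
  proof (rule sum.cong[OF refl])
    fix i assume i: "i \<in> op_supp L"
    show "L i * sp i (M (deg L + deg M - i)) = (if i = deg L then L i * sp i (M (deg M)) else 0)"
    proof (cases "i = deg L")
      case False
      then have "i < deg L" using dL[OF i] by simp
      then have "M (deg L + deg M - i) = 0" using dM by force
      then show ?thesis using False by simp
    qed simp
  qed
  also have "\<dots> = L (deg L) * sp (deg L) (M (deg M))" using f inL by (simp add: sum.delta')
  finally show "op_mult s L M (deg L + deg M) = L (deg L) * sp (deg L) (M (deg M))" .
  fix k assume k: "k > deg L + deg M"
  show "op_mult s L M k = 0" unfolding op_mult_def
  proof (rule sum.neutral, clarify)
    fix i assume "i \<in> op_supp L"
    then have "i \<le> deg L" using dL by simp
    then have "M (k - i) = 0" using dM k by force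
    then show "L i * sp i (M (k - i)) = 0" by simp
  qed
qed

lemma mult_nonzero:
  assumes "laurent_op L" "laurent_op M" "L \<noteq> op_zero" "M \<noteq> op_zero"
  shows "op_mult s L M \<noteq> op_zero" and "deg (op_mult s L M) = deg L + deg M"
proof -
  have nz: "op_mult s L M (deg L + deg M) \<noteq> 0"
    using mult_top(1)[OF assms] deg_props(1)[OF assms(1,3)] deg_props(1)[OF assms(2,4)] by simp
  then show "op_mult s L M \<noteq> op_zero" by auto
  show "deg (op_mult s L M) = deg L + deg M"
    by (rule deg_unique[OF laurent_mult[OF assms(1,2)] nz mult_top(2)[OF assms]])
qed

end

context aut begin

lemma ore_zero_above:
  assumes "ore_op a" "\<And>i. 0 \<le> i \<Longrightarrow> a i = 0" shows "a = op_zero"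
  using assms by (auto simp: op_zero_def ore_op_def intro!: ext) (meson not_le)

lemma left_div:
  assumes "ore_op a" "ore_op d" "d \<noteq> op_zero"
  shows "\<exists>q r. ore_op q \<and> ore_op r \<and> a = oadd (op_mult s q d) r \<and> (r = op_zero \<or> deg r < deg d)"
proof -
  have dd: "d (deg d) \<noteq> 0" "\<And>i. d i \<noteq> 0 \<Longrightarrow> i \<le> deg d"
    using deg_props[OF ore_laurent[OF assms(2)] assms(3)] by auto
  have dpos: "0 \<le> deg d" using ore_deg_nonneg[OF assms(2,3)] .
  have "\<forall>a. ore_op a \<longrightarrow> (\<forall>i. int N \<le> i \<longrightarrow> a i = 0) \<longrightarrow>
     (\<exists>q r. ore_op q \<and> ore_op r \<and> a = oadd (op_mult s q d) r \<and> (r = op_zero \<or> deg r < deg d))" for N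
  proof (induction N)
    case 0
    show ?case
    proof (intro allI impI)
      fix a :: "'k op" assume a: "ore_op a" "\<forall>i. int 0 \<le> i \<longrightarrow> a i = 0"
      then have "a = op_zero" by (intro ore_zero_above) auto
      then show "\<exists>q r. ore_op q \<and> ore_op r \<and> a = oadd (op_mult s q d) r \<and> (r = op_zero \<or> deg r < deg d)"
        by (intro exI[of _ op_zero]) (auto intro!: ext)
    qed
  next
    case (Suc N)
    show ?case
    proof (intro allI impI)
      fix a :: "'k op" assume a: "ore_op a" "\<forall>i. int (Suc N) \<le> i \<longrightarrow> a i = 0"
      show "\<exists>q r. ore_op q \<and> ore_op r \<and> a = oadd (op_mult s q d) r \<and> (r = op_zero \<or> deg r < deg d)"
      proof (cases "a (int N) = 0")
        case True
        have "\<forall>i. int N \<le> i \<longrightarrow> a i = 0"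
        proof (intro allI impI)
          fix i assume i: "int N \<le> i"
          show "a i = 0"
          proof (cases "i = int N")
            case False
            then have "int (Suc N) \<le> i" using i by simp
            then show ?thesis using a(2) by blast
          qed (use True in simp)
        qed
        then show ?thesis using Suc.IH a(1) by blast
      next
        case aN: False
        show ?thesis
        proof (cases "int N < deg d")
          case True
          have "deg a = int N"
            by (rule deg_unique[OF ore_laurent[OF a(1)] aN]) (use a(2) in auto)
          then show ?thesis using True a(1)
            by (intro exI[of _ op_zero] exI[of _ a]) (auto simp: oadd_def)
        next
          case False
          define e where "e = int N - deg d"
          have e0: "0 \<le> e" using False by (simp add: e_def)
          define c where "c = a (int N) / sp e (d (deg d))"
          define q1 where "q1 = mono c e"
          have q1d: "op_mult s q1 d = (\<lambda>k. c * sp e (d (k - e)))"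
            by (simp add: q1_def op_mult_mono_left)
          define a' where "a' = oadd a (oneg (op_mult s q1 d))"
          have oq1: "ore_op q1" using e0 by (simp add: q1_def ore_mono)
          have oa': "ore_op a'" unfolding a'_def using a(1) oq1 assms(2) by simp
          have "\<forall>i. int N \<le> i \<longrightarrow> a' i = 0"
          proof (intro allI impI)
            fix i assume i: "int N \<le> i"
            show "a' i = 0"
            proof (cases "i = int N")
              case True
              have "sp e (d (deg d)) \<noteq> 0" using dd(1) by simp
              then show ?thesis using True by (simp add: a'_def q1d c_def e_def)
            next
              case False
              then have "i > int N" using i by simp
              then have "a i = 0" using a(2) by auto
              moreover have "d (i - e) = 0"
              proof (rule ccontr)
                assume "d (i - e) \<noteq> 0"
                then have "i - e \<le> deg d" using dd(2) by blast
                then show False using \<open>i > int N\<close> by (simp add: e_def)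
              qed
              ultimately have "a i = 0" "d (i - e) = 0" by auto
              then show ?thesis by (simp add: a'_def q1d)
            qed
          qed
          then obtain q' r' where qr: "ore_op q'" "ore_op r'" "a' = oadd (op_mult s q' d) r'"
            "r' = op_zero \<or> deg r' < deg d"
            using Suc.IH oa' by blast
          have "a = oadd (op_mult s (oadd q' q1) d) r'"
          proof
            fix k
            have "a k = a' k + op_mult s q1 d k" by (simp add: a'_def)
            also have "\<dots> = op_mult s q' d k + r' k + op_mult s q1 d k" using qr(3) by simp
            also have "\<dots> = oadd (op_mult s (oadd q' q1) d) r' k"
              using op_mult_oadd_left[OF ore_laurent[OF qr(1)] ore_laurent[OF oq1], of d] by simp
            finally show "a k = oadd (op_mult s (oadd q' q1) d) r' k" .
          qed
          then show ?thesis using qr oq1 by (intro exI[of _ "oadd q' q1"] exI[of _ r']) auto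
        qed
      qed
    qed
  qed
  moreover obtain N :: nat where "\<forall>i. int N \<le> i \<longrightarrow> a i = 0"
  proof (cases "a = op_zero")
    case True then show ?thesis using that[of 0] by simp
  next
    case False
    have "\<forall>i. int (Suc (nat (deg a))) \<le> i \<longrightarrow> a i = 0"
    proof (intro allI impI)
      fix i assume i: "int (Suc (nat (deg a))) \<le> i"
      show "a i = 0"
      proof (rule ccontr)
        assume "a i \<noteq> 0"
        then have "i \<le> deg a" using deg_props(2)[OF ore_laurent[OF assms(1)] False] by blast
        then show False using i by linarith
      qed
    qed
    then show ?thesis using that by blast
  qed
  ultimately show ?thesis using assms(1) by blast
qed

lemma right_div:
  assumes "ore_op a" "ore_op d" "d \<noteq> op_zero"
  shows "\<exists>q r. ore_op q \<and> ore_op r \<and> a = oadd (op_mult s d q) r \<and> (r = op_zero \<or> deg r < deg d)"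
proof -
  have dd: "d (deg d) \<noteq> 0" "\<And>i. d i \<noteq> 0 \<Longrightarrow> i \<le> deg d"
    using deg_props[OF ore_laurent[OF assms(2)] assms(3)] by auto
  have ld: "laurent_op d" using ore_laurent[OF assms(2)] .
  have "\<forall>a. ore_op a \<longrightarrow> (\<forall>i. int N \<le> i \<longrightarrow> a i = 0) \<longrightarrow>
     (\<exists>q r. ore_op q \<and> ore_op r \<and> a = oadd (op_mult s d q) r \<and> (r = op_zero \<or> deg r < deg d))" for N
  proof (induction N)
    case 0
    show ?case
    proof (intro allI impI)
      fix a :: "'k op" assume a: "ore_op a" "\<forall>i. int 0 \<le> i \<longrightarrow> a i = 0"
      then have "a = op_zero" by (intro ore_zero_above) auto
      then show "\<exists>q r. ore_op q \<and> ore_op r \<and> a = oadd (op_mult s d q) r \<and> (r = op_zero \<or> deg r < deg d)"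
        by (intro exI[of _ op_zero]) (auto intro!: ext)
    qed
  next
    case (Suc N)
    show ?case
    proof (intro allI impI)
      fix a :: "'k op" assume a: "ore_op a" "\<forall>i. int (Suc N) \<le> i \<longrightarrow> a i = 0"
      show "\<exists>q r. ore_op q \<and> ore_op r \<and> a = oadd (op_mult s d q) r \<and> (r = op_zero \<or> deg r < deg d)"
      proof (cases "a (int N) = 0")
        case True
        have "\<forall>i. int N \<le> i \<longrightarrow> a i = 0"
        proof (intro allI impI)
          fix i assume i: "int N \<le> i"
          show "a i = 0"
          proof (cases "i = int N")
            case False
            then have "int (Suc N) \<le> i" using i by simp
            then show ?thesis using a(2) by blast
          qed (use True in simp)
        qed
        then show ?thesis using Suc.IH a(1) by blast
      next
        case aN: False
        show ?thesis
        proof (cases "int N < deg d")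
          case True
          have "deg a = int N"
            by (rule deg_unique[OF ore_laurent[OF a(1)] aN]) (use a(2) in auto)
          then show ?thesis using True a(1)
            by (intro exI[of _ op_zero] exI[of _ a]) (auto simp: oadd_def)
        next
          case False
          define e where "e = int N - deg d"
          have e0: "0 \<le> e" using False by (simp add: e_def)
          define c where "c = sp (- deg d) (a (int N) / d (deg d))"
          define q1 where "q1 = mono c e"
          have q1d: "op_mult s d q1 = (\<lambda>k. d (k - e) * sp (k - e) c)"
            by (simp add: q1_def op_mult_mono_right[OF ld])
          define a' where "a' = oadd a (oneg (op_mult s d q1))"
          have oq1: "ore_op q1" using e0 by (simp add: q1_def ore_mono)
          have oa': "ore_op a'" unfolding a'_def using a(1) oq1 assms(2) by simp
          have "\<forall>i. int N \<le> i \<longrightarrow> a' i = 0"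
          proof (intro allI impI)
            fix i assume i: "int N \<le> i"
            show "a' i = 0"
            proof (cases "i = int N")
              case True
              have "sp (deg d) c = a (int N) / d (deg d)" by (simp add: c_def sp_sp)
              then show ?thesis using True dd(1) by (simp add: a'_def q1d e_def)
            next
              case False
              then have "i > int N" using i by simp
              then have "a i = 0" using a(2) by auto
              moreover have "d (i - e) = 0"
              proof (rule ccontr)
                assume "d (i - e) \<noteq> 0"
                then have "i - e \<le> deg d" using dd(2) by blast
                then show False using \<open>i > int N\<close> by (simp add: e_def)
              qed
              ultimately have "a i = 0" "d (i - e) = 0" by auto
              then show ?thesis by (simp add: a'_def q1d)
            qed
          qed
          then obtain q' r' where qr: "ore_op q'" "ore_op r'" "a' = oadd (op_mult s d q') r'"
            "r' = op_zero \<or> deg r' < deg d"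
            using Suc.IH oa' by blast
          have "a = oadd (op_mult s d (oadd q' q1)) r'"
          proof
            fix k
            have "a k = a' k + op_mult s d q1 k" by (simp add: a'_def)
            also have "\<dots> = op_mult s d q' k + r' k + op_mult s d q1 k" using qr(3) by simp
            also have "\<dots> = oadd (op_mult s d (oadd q' q1)) r' k"
              using op_mult_oadd_right[of d q' q1] by simp
            finally show "a k = oadd (op_mult s d (oadd q' q1)) r' k" .
          qed
          then show ?thesis using qr oq1 by (intro exI[of _ "oadd q' q1"] exI[of _ r']) auto
        qed
      qed
    qed
  qed
  moreover obtain N :: nat where "\<forall>i. int N \<le> i \<longrightarrow> a i = 0"
  proof (cases "a = op_zero")
    case True then show ?thesis using that[of 0] by simp
  next
    case False
    have "\<forall>i. int (Suc (nat (deg a))) \<le> i \<longrightarrow> a i = 0"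
    proof (intro allI impI)
      fix i assume i: "int (Suc (nat (deg a))) \<le> i"
      show "a i = 0"
      proof (rule ccontr)
        assume "a i \<noteq> 0"
        then have "i \<le> deg a" using deg_props(2)[OF ore_laurent[OF assms(1)] False] by blast
        then show False using i by linarith
      qed
    qed
    then show ?thesis using that by blast
  qed
  ultimately show ?thesis using assms(1) by blast
qed

lemma ore_condition:
  assumes "ore_op a" "ore_op v" "v \<noteq> op_zero"
  shows "\<exists>x y. ore_op x \<and> ore_op y \<and> y \<noteq> op_zero \<and> op_mult s y a = op_mult s x v"
proof -
  have "\<forall>a v. ore_op a \<longrightarrow> ore_op v \<longrightarrow> v \<noteq> op_zero \<longrightarrow> nat (deg v) < N \<longrightarrow>
      (\<exists>x y. ore_op x \<and> ore_op y \<and> y \<noteq> op_zero \<and> op_mult s y a = op_mult s x v)" for N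
  proof (induction N)
    case 0 then show ?case by simp
  next
    case (Suc N)
    show ?case
    proof (intro allI impI)
      fix a v :: "'k op"
      assume av: "ore_op a" "ore_op v" "v \<noteq> op_zero" "nat (deg v) < Suc N"
      obtain q r where qr: "ore_op q" "ore_op r" "a = oadd (op_mult s q v) r" "r = op_zero \<or> deg r < deg v"
        using left_div[OF av(1-3)] by blast
      show "\<exists>x y. ore_op x \<and> ore_op y \<and> y \<noteq> op_zero \<and> op_mult s y a = op_mult s x v"
      proof (cases "r = op_zero")
        case True
        then have "a = op_mult s q v" using qr(3) by (auto simp: oadd_def op_zero_def)
        then show ?thesis using qr(1) one_nz by (intro exI[of _ q] exI[of _ op_one]) simp
      next
        case False
        have "0 \<le> deg r" using ore_deg_nonneg[OF qr(2) False] .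
        then have "nat (deg r) < N" using qr(4) False av(4) by linarith
        then obtain x' y' where xy: "ore_op x'" "ore_op y'" "y' \<noteq> op_zero" "op_mult s y' v = op_mult s x' r"
          using Suc.IH av(2) qr(2) False by blast
        have x'nz: "x' \<noteq> op_zero"
          using xy(4) mult_nonzero(1)[OF ore_laurent[OF xy(2)] ore_laurent[OF av(2)] xy(3) av(3)] by auto
        have "op_mult s x' a = oadd (op_mult s x' (op_mult s q v)) (op_mult s x' r)"
          using qr(3) op_mult_oadd_right by simp
        also have "\<dots> = oadd (op_mult s (op_mult s x' q) v) (op_mult s y' v)"
          using op_mult_assoc[OF ore_laurent[OF xy(1)] ore_laurent[OF qr(1)]] xy(4) by simp
        also have "\<dots> = op_mult s (oadd (op_mult s x' q) y') v"
          using op_mult_oadd_left[symmetric, OF laurent_mult[OF ore_laurent[OF xy(1)] ore_laurent[OF qr(1)]] ore_laurent[OF xy(2)]] by simp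
        finally show ?thesis using xy x'nz qr(1)
          by (intro exI[of _ "oadd (op_mult s x' q) y'"] exI[of _ x']) auto
      qed
    qed
  qed
  then show ?thesis using assms by blast
qed

end



lemma mat_eq_refl[simp]: "mat_eq A A m n" by (simp add: mat_eq_def)
lemma mat_eq_sym: "mat_eq A B m n \<Longrightarrow> mat_eq B A m n" by (simp add: mat_eq_def)
lemma mat_eq_trans: "mat_eq A B m n \<Longrightarrow> mat_eq B C m n \<Longrightarrow> mat_eq A C m n" by (simp add: mat_eq_def)

lemma osum_swap: "osum (\<lambda>g. osum (\<lambda>h. F h g) H) G = osum (\<lambda>h. osum (\<lambda>g. F h g) G) H"
  by (rule ext) (simp add: sum.swap[of _ G])

lemma osum_cong: "(\<And>j. j \<in> J \<Longrightarrow> F j = G j) \<Longrightarrow> osum F J = osum G J"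
  by (rule ext) (simp add: osum_def)

lemma mm_eq: "mat_mult s A B k i j = osum (\<lambda>h. op_mult s (A i h) (B h j)) {..<k}"
  by (simp add: mat_mult_def osum_def)

lemma mat_mult_cong_left: "mat_eq A A' m k \<Longrightarrow> mat_eq (mat_mult s A B k) (mat_mult s A' B k) m n"
  by (simp add: mat_eq_def mat_mult_def)
lemma mat_mult_cong_right: "mat_eq B B' k n \<Longrightarrow> mat_eq (mat_mult s A B k) (mat_mult s A B' k) m n"
  by (simp add: mat_eq_def mat_mult_def)

lemma mat_apply_cong: "(\<And>j. j < n \<Longrightarrow> y j = y' j) \<Longrightarrow> mat_apply s A n y i = mat_apply s A n y' i"
  by (simp add: mat_apply_def)

lemma mat_apply_cong_mat: "(\<And>j. j < n \<Longrightarrow> A i j = A' i j) \<Longrightarrow> mat_apply s A n y i = mat_apply s A' n y i"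
  by (simp add: mat_apply_def)

context aut begin

lemma laurent_mat_mult: "laurent_mat A m k \<Longrightarrow> laurent_mat B k n \<Longrightarrow> laurent_mat (mat_mult s A B k) m n"
  unfolding laurent_mat_def mm_eq by (auto intro!: laurent_osum laurent_mult)

lemma ore_mat_mult: "ore_mat A m k \<Longrightarrow> ore_mat B k n \<Longrightarrow> ore_mat (mat_mult s A B k) m n"
  unfolding ore_mat_def mm_eq by (auto intro!: ore_osum ore_mult)

lemma ore_laurent_mat: "ore_mat A m n \<Longrightarrow> laurent_mat A m n"
  by (simp add: ore_mat_def laurent_mat_def ore_laurent)

lemma mat_assoc_entry:
  assumes "\<And>h. h < k \<Longrightarrow> laurent_op (A i h)" "\<And>h g. h < k \<Longrightarrow> g < l \<Longrightarrow> laurent_op (B h g)"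
  shows "mat_mult s (mat_mult s A B k) C l i j = mat_mult s A (mat_mult s B C l) k i j"
proof -
  have "mat_mult s (mat_mult s A B k) C l i j
      = osum (\<lambda>g. osum (\<lambda>h. op_mult s (op_mult s (A i h) (B h g)) (C g j)) {..<k}) {..<l}"
    unfolding mm_eq by (rule osum_cong, rule op_mult_osum_left) (use assms in auto)
  also have "\<dots> = osum (\<lambda>g. osum (\<lambda>h. op_mult s (A i h) (op_mult s (B h g) (C g j))) {..<k}) {..<l}"
    by (intro osum_cong op_mult_assoc) (use assms in auto)
  also have "\<dots> = osum (\<lambda>h. osum (\<lambda>g. op_mult s (A i h) (op_mult s (B h g) (C g j))) {..<l}) {..<k}"
    by (rule osum_swap)
  also have "\<dots> = mat_mult s A (mat_mult s B C l) k i j"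
    unfolding mm_eq by (simp add: op_mult_osum_right)
  finally show ?thesis .
qed

end

context aut begin

lemma mat_assoc:
  assumes "laurent_mat A m k" "laurent_mat B k l"
  shows "mat_eq (mat_mult s (mat_mult s A B k) C l) (mat_mult s A (mat_mult s B C l) k) m n"
  unfolding mat_eq_def using assms by (auto simp: laurent_mat_def intro!: mat_assoc_entry)

lemma osum_delta: "finite J \<Longrightarrow> i \<in> J \<Longrightarrow> osum (\<lambda>h. if h = i then F h else op_zero) J = F i"
proof (rule ext)
  fix x assume "finite J" "i \<in> J"
  have "osum (\<lambda>h. if h = i then F h else op_zero) J x = (\<Sum>j\<in>J. if j = i then F j x else 0)"
    by (simp, rule sum.cong) auto
  also have "\<dots> = F i x" using \<open>finite J\<close> \<open>i \<in> J\<close> by (simp add: sum.delta)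
  finally show "osum (\<lambda>h. if h = i then F h else op_zero) J x = F i x" .
qed

lemma mat_id_left: "mat_eq (mat_mult s mat_id A m) A m n"
proof -
  have "mat_mult s mat_id A m i j = A i j" if "i < m" for i j
  proof -
    have "mat_mult s mat_id A m i j = osum (\<lambda>h. if h = i then A h j else op_zero) {..<m}"
      unfolding mm_eq by (rule osum_cong) (auto simp: mat_id_def)
    also have "\<dots> = A i j" using that by (simp add: osum_delta)
    finally show ?thesis .
  qed
  then show ?thesis by (simp add: mat_eq_def)
qed

lemma mat_id_right: assumes "laurent_mat A m n" shows "mat_eq (mat_mult s A mat_id n) A m n"
proof -
  have "mat_mult s A mat_id n i j = A i j" if "i < m" "j < n" for i j
  proof -
    have "mat_mult s A mat_id n i j = osum (\<lambda>h. if h = j then A i h else op_zero) {..<n}"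
      unfolding mm_eq by (rule osum_cong) (use assms that in \<open>auto simp: mat_id_def laurent_mat_def op_mult_one_right\<close>)
    also have "\<dots> = A i j" using that by (simp add: osum_delta)
    finally show ?thesis .
  qed
  then show ?thesis by (simp add: mat_eq_def)
qed

lemma mat_apply_mult_entry:
  assumes "\<And>h. h < k \<Longrightarrow> laurent_op (A i h)" "\<And>h g. h < k \<Longrightarrow> g < l \<Longrightarrow> laurent_op (B h g)"
  shows "mat_apply s (mat_mult s A B k) l y i = mat_apply s A k (mat_apply s B l y) i"
proof -
  have "mat_apply s (mat_mult s A B k) l y i = (\<Sum>g<l. \<Sum>h<k. op_apply s (A i h) (op_apply s (B h g) (y g)))"
    unfolding mat_apply_def mm_eq
    by (rule sum.cong[OF refl], subst op_apply_osum) (use assms in \<open>auto intro!: sum.cong op_apply_mult\<close>)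
  also have "\<dots> = (\<Sum>h<k. \<Sum>g<l. op_apply s (A i h) (op_apply s (B h g) (y g)))" by (rule sum.swap)
  also have "\<dots> = mat_apply s A k (mat_apply s B l y) i"
    by (simp add: mat_apply_def op_apply_sum_right)
  finally show ?thesis .
qed

lemma mat_apply_mult:
  assumes "laurent_mat A m k" "laurent_mat B k l" "i < m"
  shows "mat_apply s (mat_mult s A B k) l y i = mat_apply s A k (mat_apply s B l y) i"
  using assms by (auto simp: laurent_mat_def intro!: mat_apply_mult_entry)

lemma mat_apply_id: "i < n \<Longrightarrow> mat_apply s mat_id n y i = y i"
proof -
  assume i: "i < n"
  have "mat_apply s mat_id n y i = (\<Sum>j<n. if j = i then y j else 0)"
    unfolding mat_apply_def by (rule sum.cong) (auto simp: mat_id_def)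
  also have "\<dots> = y i" using i by (simp add: sum.delta)
  finally show ?thesis .
qed

definition lunimod where
  "lunimod P Pv m \<longleftrightarrow> laurent_mat P m m \<and> laurent_mat Pv m m \<and> is_inverse s P Pv m"
definition ounimod where
  "ounimod P Pv m \<longleftrightarrow> ore_mat P m m \<and> ore_mat Pv m m \<and> is_inverse s P Pv m"

lemma ounimod_lunimod: "ounimod P Pv m \<Longrightarrow> lunimod P Pv m"
  by (simp add: ounimod_def lunimod_def ore_laurent_mat)

lemma lunimod_unimodular: "lunimod P Pv m \<Longrightarrow> unimodular_laurent s P m"
  by (auto simp: lunimod_def unimodular_laurent_def)

lemma laurent_mat_id[simp]: "laurent_mat mat_id m m" by (simp add: laurent_mat_def mat_id_def)
lemma ore_mat_id[simp]: "ore_mat mat_id m m" by (simp add: ore_mat_def mat_id_def)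

lemma ounimod_id: "ounimod mat_id mat_id m"
  by (simp add: ounimod_def is_inverse_def mat_id_left)

lemma inv_half:
  assumes "laurent_mat P m m" "laurent_mat Pv m m" "laurent_mat P' m m" "laurent_mat Pv' m m"
    "mat_eq (mat_mult s P Pv m) mat_id m m" "mat_eq (mat_mult s P' Pv' m) mat_id m m"
  shows "mat_eq (mat_mult s (mat_mult s P' P m) (mat_mult s Pv Pv' m) m) mat_id m m"
proof -
  have e1: "mat_eq (mat_mult s (mat_mult s P' P m) (mat_mult s Pv Pv' m) m)
                (mat_mult s P' (mat_mult s P (mat_mult s Pv Pv' m) m) m) m m"
    using mat_assoc assms by blast
  have e2: "mat_eq (mat_mult s P' (mat_mult s P (mat_mult s Pv Pv' m) m) m) (mat_mult s P' (mat_mult s (mat_mult s P Pv m) Pv' m) m) m m"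
    by (rule mat_mult_cong_right, rule mat_eq_sym, rule mat_assoc) (use assms in auto)
  have e3: "mat_eq (mat_mult s P' (mat_mult s (mat_mult s P Pv m) Pv' m) m) (mat_mult s P' (mat_mult s mat_id Pv' m) m) m m"
    by (rule mat_mult_cong_right, rule mat_mult_cong_left) (use assms in auto)
  have e4: "mat_eq (mat_mult s P' (mat_mult s mat_id Pv' m) m) (mat_mult s P' Pv' m) m m"
    by (rule mat_mult_cong_right, rule mat_id_left)
  show ?thesis using e1 e2 e3 e4 assms(6) by (meson mat_eq_trans)
qed

lemma lunimod_mult:
  assumes "lunimod P Pv m" "lunimod P' Pv' m"
  shows "lunimod (mat_mult s P' P m) (mat_mult s Pv Pv' m) m"
  using assms unfolding lunimod_def is_inverse_def
  by (auto intro: laurent_mat_mult inv_half)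

lemma ounimod_mult:
  assumes "ounimod P Pv m" "ounimod P' Pv' m"
  shows "ounimod (mat_mult s P' P m) (mat_mult s Pv Pv' m) m"
  using lunimod_mult[OF ounimod_lunimod[OF assms(1)] ounimod_lunimod[OF assms(2)]] assms
  unfolding ounimod_def lunimod_def by (auto intro: ore_mat_mult)

end


definition tr :: "nat \<Rightarrow> nat \<Rightarrow> nat \<Rightarrow> nat" where
  "tr a b i = (if i = a then b else if i = b then a else i)"

lemma tr_tr[simp]: "tr a b (tr a b i) = i" by (simp add: tr_def)
lemma tr_less: "a < M \<Longrightarrow> b < M \<Longrightarrow> i < M \<Longrightarrow> tr a b i < M" by (simp add: tr_def)
lemma tr_eq_iff: "(j = tr a b h) \<longleftrightarrow> (h = tr a b j)" by (auto simp: tr_def)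

definition swm :: "nat \<Rightarrow> nat \<Rightarrow> 'k::{zero,one} opmat" where
  "swm a b = (\<lambda>i j. if j = tr a b i then op_one else op_zero)"

definition rowop :: "(nat \<Rightarrow> 'k::{zero,one} op) \<Rightarrow> 'k opmat" where
  "rowop q = (\<lambda>i j. if i = j then op_one else if j = 0 \<and> 0 < i then q i else op_zero)"

definition colop :: "(nat \<Rightarrow> 'k::{zero,one} op) \<Rightarrow> 'k opmat" where
  "colop q = (\<lambda>i j. if i = j then op_one else if i = 0 \<and> 0 < j then q j else op_zero)"

lemma ore_swm: "ore_mat (swm a b) M M" by (simp add: ore_mat_def swm_def)
lemma ore_rowop: "(\<And>i. 0 < i \<Longrightarrow> i < M \<Longrightarrow> ore_op (q i)) \<Longrightarrow> ore_mat (rowop q) M M"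
  by (simp add: ore_mat_def rowop_def)
lemma ore_colop: "(\<And>i. 0 < i \<Longrightarrow> i < M \<Longrightarrow> ore_op (q i)) \<Longrightarrow> ore_mat (colop q) M M"
  by (simp add: ore_mat_def colop_def)

context aut begin

lemma swm_left: assumes "a < M" "b < M" "i < M"
  shows "mat_mult s (swm a b) A M i j = A (tr a b i) j"
proof -
  have "mat_mult s (swm a b) A M i j = osum (\<lambda>h. if h = tr a b i then A h j else op_zero) {..<M}"
    unfolding mm_eq by (rule osum_cong) (auto simp: swm_def)
  also have "\<dots> = A (tr a b i) j" using assms tr_less by (simp add: osum_delta)
  finally show ?thesis .
qed

lemma swm_right: assumes "a < N" "b < N" "j < N" "\<And>h. h < N \<Longrightarrow> laurent_op (A i h)"
  shows "mat_mult s A (swm a b) N i j = A i (tr a b j)"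
proof -
  have "mat_mult s A (swm a b) N i j = osum (\<lambda>h. if h = tr a b j then A i h else op_zero) {..<N}"
    unfolding mm_eq by (rule osum_cong) (use assms(4) in \<open>auto simp: swm_def tr_eq_iff op_mult_one_right\<close>)
  also have "\<dots> = A i (tr a b j)" using assms tr_less by (simp add: osum_delta)
  finally show ?thesis .
qed

lemma ounimod_swm: assumes "a < M" "b < M" shows "ounimod (swm a b) (swm a b) M"
proof -
  have "mat_eq (mat_mult s (swm a b) (swm a b) M) mat_id M M"
    unfolding mat_eq_def
  proof (intro allI impI)
    fix i j assume ij: "i < M" "j < M"
    show "mat_mult s (swm a b) (swm a b) M i j = mat_id i j"
      using swm_left[OF assms ij(1), of "swm a b" j] by (auto simp: swm_def mat_id_def)
  qed
  then show ?thesis by (simp add: ounimod_def is_inverse_def ore_swm)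
qed

lemma rowop_left:
  assumes "i < M" "0 < M"
  shows "mat_mult s (rowop q) A M i j = (if i = 0 then A 0 j else oadd (A i j) (op_mult s (q i) (A 0 j)))"
proof (cases "i = 0")
  case True
  have "mat_mult s (rowop q) A M i j = osum (\<lambda>h. if h = i then A h j else op_zero) {..<M}"
    unfolding mm_eq by (rule osum_cong) (use True in \<open>auto simp: rowop_def\<close>)
  then show ?thesis using True assms by (simp add: osum_delta)
next
  case False
  have "mat_mult s (rowop q) A M i j d = oadd (A i j) (op_mult s (q i) (A 0 j)) d" for d
  proof -
    have "mat_mult s (rowop q) A M i j d = (\<Sum>h<M. (if h = i then A h j d else 0) + (if h = 0 then op_mult s (q i) (A 0 j) d else 0))"
      unfolding mm_eq osum_apply by (rule sum.cong) (use False in \<open>auto simp: rowop_def\<close>)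
    also have "\<dots> = A i j d + op_mult s (q i) (A 0 j) d"
      using assms by (simp add: sum.distrib sum.delta)
    finally show ?thesis by simp
  qed
  then show ?thesis using False by auto
qed

lemma colop_right:
  assumes "j < N" "0 < N" "\<And>h. h < N \<Longrightarrow> laurent_op (A i h)"
  shows "mat_mult s A (colop q) N i j = (if j = 0 then A i 0 else oadd (A i j) (op_mult s (A i 0) (q j)))"
proof (cases "j = 0")
  case True
  have "mat_mult s A (colop q) N i j = osum (\<lambda>h. if h = j then A i h else op_zero) {..<N}"
    unfolding mm_eq by (rule osum_cong) (use True assms in \<open>auto simp: colop_def op_mult_one_right\<close>)
  then show ?thesis using True assms by (simp add: osum_delta)
next
  case False
  have "mat_mult s A (colop q) N i j d = oadd (A i j) (op_mult s (A i 0) (q j)) d" for d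
  proof -
    have "mat_mult s A (colop q) N i j d = (\<Sum>h<N. (if h = j then A i h d else 0) + (if h = 0 then op_mult s (A i 0) (q j) d else 0))"
      unfolding mm_eq osum_apply by (rule sum.cong) (use False assms in \<open>auto simp: colop_def op_mult_one_right\<close>)
    also have "\<dots> = A i j d + op_mult s (A i 0) (q j) d"
      using assms by (simp add: sum.distrib sum.delta)
    finally show ?thesis by simp
  qed
  then show ?thesis using False by auto
qed

end


lemma oadd_zero_right[simp]: "oadd L op_zero = L" by (rule ext) simp
lemma oadd_zero_left[simp]: "oadd op_zero L = L" by (rule ext) simp
lemma oadd_neg_left[simp]: "oadd (oneg L) L = op_zero" by (rule ext) simp
lemma oadd_neg_right[simp]: "oadd L (oneg L) = op_zero" by (rule ext) simp

context aut begin

lemma ounimod_rowop: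
  assumes "\<And>i. 0 < i \<Longrightarrow> i < M \<Longrightarrow> ore_op (q i)" "0 < M"
  shows "ounimod (rowop q) (rowop (\<lambda>i. oneg (q i))) M"
proof -
  have o1: "ore_mat (rowop q) M M" using assms by (intro ore_rowop) auto
  have o2: "ore_mat (rowop (\<lambda>i. oneg (q i))) M M" using assms by (intro ore_rowop) auto
  have e1: "mat_eq (mat_mult s (rowop q) (rowop (\<lambda>i. oneg (q i))) M) mat_id M M"
    unfolding mat_eq_def
  proof (intro allI impI)
    fix i j assume ij: "i < M" "j < M"
    show "mat_mult s (rowop q) (rowop (\<lambda>i. oneg (q i))) M i j = mat_id i j"
      using assms ij rowop_left[OF ij(1) assms(2), of q "rowop (\<lambda>i. oneg (q i))" j]
      by (auto simp: rowop_def mat_id_def op_mult_one_right ore_laurent)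
  qed
  have e2: "mat_eq (mat_mult s (rowop (\<lambda>i. oneg (q i))) (rowop q) M) mat_id M M"
    unfolding mat_eq_def
  proof (intro allI impI)
    fix i j assume ij: "i < M" "j < M"
    show "mat_mult s (rowop (\<lambda>i. oneg (q i))) (rowop q) M i j = mat_id i j"
      using assms ij rowop_left[OF ij(1) assms(2), of "\<lambda>i. oneg (q i)" "rowop q" j]
      by (auto simp: rowop_def mat_id_def op_mult_one_right ore_laurent op_mult_oneg_left)
  qed
  show ?thesis using o1 o2 e1 e2 by (simp add: ounimod_def is_inverse_def)
qed

lemma ounimod_colop:
  assumes "\<And>i. 0 < i \<Longrightarrow> i < N \<Longrightarrow> ore_op (q i)" "0 < N"
  shows "ounimod (colop q) (colop (\<lambda>i. oneg (q i))) N"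
proof -
  have o1: "ore_mat (colop q) N N" using assms by (intro ore_colop) auto
  have o2: "ore_mat (colop (\<lambda>i. oneg (q i))) N N" using assms by (intro ore_colop) auto
  have e1: "mat_eq (mat_mult s (colop q) (colop (\<lambda>i. oneg (q i))) N) mat_id N N"
    unfolding mat_eq_def
  proof (intro allI impI)
    fix i j assume ij: "i < N" "j < N"
    have l: "\<And>h. h < N \<Longrightarrow> laurent_op (colop q i h)"
      using o1 ij by (simp add: ore_mat_def ore_laurent)
    show "mat_mult s (colop q) (colop (\<lambda>i. oneg (q i))) N i j = mat_id i j"
      using assms ij colop_right[where A = "colop q" and i = i, OF ij(2) assms(2) l]
      by (auto simp: colop_def mat_id_def)
  qed
  have e2: "mat_eq (mat_mult s (colop (\<lambda>i. oneg (q i))) (colop q) N) mat_id N N"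
    unfolding mat_eq_def
  proof (intro allI impI)
    fix i j assume ij: "i < N" "j < N"
    have l: "\<And>h. h < N \<Longrightarrow> laurent_op (colop (\<lambda>i. oneg (q i)) i h)"
      using o2 ij by (simp add: ore_mat_def ore_laurent)
    show "mat_mult s (colop (\<lambda>i. oneg (q i))) (colop q) N i j = mat_id i j"
      using assms ij colop_right[where A = "colop (\<lambda>i. oneg (q i))" and i = i, OF ij(2) assms(2) l]
      by (auto simp: colop_def mat_id_def)
  qed
  show ?thesis using o1 o2 e1 e2 by (simp add: ounimod_def is_inverse_def)
qed

lemma trans_comp:
  assumes "laurent_mat P2 m m" "laurent_mat P1 m m" "laurent_mat A m n" "laurent_mat Q1 n n" "laurent_mat Q2 n n"
  shows "mat_eq (mat_mult s (mat_mult s (mat_mult s P2 P1 m) A m) (mat_mult s Q1 Q2 n) n)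
                (mat_mult s (mat_mult s P2 (mat_mult s (mat_mult s P1 A m) Q1 n) m) Q2 n) m n"
proof -
  let ?X = "mat_mult s P2 (mat_mult s P1 A m) m"
  have lX: "laurent_mat ?X m n" using assms by (intro laurent_mat_mult) auto
  have e1: "mat_eq (mat_mult s (mat_mult s (mat_mult s P2 P1 m) A m) (mat_mult s Q1 Q2 n) n)
                   (mat_mult s ?X (mat_mult s Q1 Q2 n) n) m n"
    by (rule mat_mult_cong_left, rule mat_assoc) (use assms in auto)
  have e2: "mat_eq (mat_mult s ?X (mat_mult s Q1 Q2 n) n) (mat_mult s (mat_mult s ?X Q1 n) Q2 n) m n"
    by (rule mat_eq_sym, rule mat_assoc) (use assms lX in auto)
  have e3: "mat_eq (mat_mult s (mat_mult s ?X Q1 n) Q2 n) (mat_mult s (mat_mult s P2 (mat_mult s (mat_mult s P1 A m) Q1 n) m) Q2 n) m n"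
    by (rule mat_mult_cong_left, rule mat_assoc) (use assms laurent_mat_mult in auto)
  show ?thesis using e1 e2 e3 by (meson mat_eq_trans)
qed

definition reach :: "'k opmat \<Rightarrow> nat \<Rightarrow> nat \<Rightarrow> ('k opmat \<Rightarrow> bool) \<Rightarrow> bool" where
  "reach A M N \<Phi> \<longleftrightarrow> (\<exists>P Pv Q Qv. ounimod P Pv M \<and> ounimod Q Qv N \<and> \<Phi> (mat_mult s (mat_mult s P A M) Q N))"

definition inv_pred :: "('k opmat \<Rightarrow> bool) \<Rightarrow> nat \<Rightarrow> nat \<Rightarrow> bool" where
  "inv_pred \<Phi> M N \<longleftrightarrow> (\<forall>B B'. mat_eq B B' M N \<longrightarrow> \<Phi> B \<longrightarrow> \<Phi> B')"

lemma reach_refl: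
  assumes "ore_mat A M N" "inv_pred \<Phi> M N" "\<Phi> A"
  shows "reach A M N \<Phi>"
proof -
  have "mat_eq (mat_mult s (mat_mult s mat_id A M) mat_id N) A M N"
  proof -
    have l: "laurent_mat (mat_mult s mat_id A M) M N" using assms(1) by (intro laurent_mat_mult ore_laurent_mat) auto
    show ?thesis using mat_id_right[OF l] mat_id_left[of A M N] mat_eq_trans by blast
  qed
  then have "\<Phi> (mat_mult s (mat_mult s mat_id A M) mat_id N)"
    using assms(2,3) mat_eq_sym unfolding inv_pred_def by blast
  then show ?thesis unfolding reach_def using ounimod_id by blast
qed

lemma reach_trans:
  assumes "ore_mat A M N" "ounimod P1 Pv1 M" "ounimod Q1 Qv1 N"
    "mat_eq B (mat_mult s (mat_mult s P1 A M) Q1 N) M N" "reach B M N \<Phi>" "inv_pred \<Phi> M N"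
  shows "reach A M N \<Phi>"
proof -
  obtain P2 Pv2 Q2 Qv2 where r: "ounimod P2 Pv2 M" "ounimod Q2 Qv2 N" "\<Phi> (mat_mult s (mat_mult s P2 B M) Q2 N)"
    using assms(5) unfolding reach_def by blast
  have l: "laurent_mat P2 M M" "laurent_mat P1 M M" "laurent_mat A M N" "laurent_mat Q1 N N" "laurent_mat Q2 N N"
    using r assms by (auto simp: ounimod_def ore_laurent_mat)
  have "mat_eq (mat_mult s (mat_mult s P2 B M) Q2 N) (mat_mult s (mat_mult s P2 (mat_mult s (mat_mult s P1 A M) Q1 N) M) Q2 N) M N"
    by (intro mat_mult_cong_left mat_mult_cong_right assms(4))
  then have "mat_eq (mat_mult s (mat_mult s P2 B M) Q2 N) (mat_mult s (mat_mult s (mat_mult s P2 P1 M) A M) (mat_mult s Q1 Q2 N) N) M N"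
    using trans_comp[OF l] mat_eq_sym mat_eq_trans by blast
  then have "\<Phi> (mat_mult s (mat_mult s (mat_mult s P2 P1 M) A M) (mat_mult s Q1 Q2 N) N)"
    using r(3) assms(6) unfolding inv_pred_def by blast
  then show ?thesis unfolding reach_def
    using ounimod_mult[OF assms(2) r(1)] ounimod_mult[OF r(2) assms(3)] by blast
qed

end




definition cleared :: "'k::zero opmat \<Rightarrow> nat \<Rightarrow> nat \<Rightarrow> bool" where
  "cleared B M N \<longleftrightarrow> B 0 0 \<noteq> op_zero \<and> (\<forall>i. 0 < i \<and> i < M \<longrightarrow> B i 0 = op_zero) \<and> (\<forall>j. 0 < j \<and> j < N \<longrightarrow> B 0 j = op_zero)"

context aut begin

lemma inv_cleared: "0 < M \<Longrightarrow> 0 < N \<Longrightarrow> inv_pred (\<lambda>B. cleared B M N) M N"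
  by (auto simp: inv_pred_def cleared_def mat_eq_def)

lemma choice2: assumes "\<forall>i. \<exists>q r. P i q r" shows "\<exists>q r. \<forall>i. P i (q i) (r i)"
proof -
  obtain f where f: "\<forall>i. \<exists>r. P i (f i) r" using choice[OF assms] by (elim exE)
  obtain g where g: "\<forall>i. P i (f i) (g i)" using choice[OF f] by (elim exE)
  show ?thesis using g by (intro exI)
qed

lemma step_main:
  "\<forall>(A::'k opmat) i0 j0. ore_mat A M N \<longrightarrow> i0 < M \<longrightarrow> j0 < N \<longrightarrow> A i0 j0 \<noteq> op_zero \<longrightarrow> nat (deg (A i0 j0)) < D
     \<longrightarrow> reach A M N (\<lambda>B. cleared B M N)"
proof (induction D)
  case 0 then show ?case by simp
next
  case (Suc D)
  show ?case
  proof (intro allI impI)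
    fix A :: "'k opmat" and i0 j0
    assume oA: "ore_mat A M N" and i0: "i0 < M" and j0: "j0 < N" and nz: "A i0 j0 \<noteq> op_zero"
      and dg: "nat (deg (A i0 j0)) < Suc D"
    have M0: "0 < M" and N0: "0 < N" using i0 j0 by auto
    have inv: "inv_pred (\<lambda>B. cleared B M N) M N" using inv_cleared[OF M0 N0] .
    define A1 where "A1 = mat_mult s (mat_mult s (swm 0 i0) A M) (swm 0 j0) N"
    have oA1: "ore_mat A1 M N" unfolding A1_def using oA ore_swm by (intro ore_mat_mult) auto
    have lSA: "laurent_mat (mat_mult s (swm 0 i0) A M) M N"
      using oA ore_swm by (intro laurent_mat_mult ore_laurent_mat) auto
    have A1e: "A1 i j = A (tr 0 i0 i) (tr 0 j0 j)" if "i < M" "j < N" for i j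
    proof -
      have "A1 i j = mat_mult s (swm 0 i0) A M i (tr 0 j0 j)"
        unfolding A1_def by (rule swm_right) (use that j0 N0 lSA in \<open>auto simp: laurent_mat_def\<close>)
      also have "\<dots> = A (tr 0 i0 i) (tr 0 j0 j)" by (rule swm_left) (use that i0 M0 in auto)
      finally show ?thesis .
    qed
    define e where "e = A1 0 0"
    have e: "e = A i0 j0" using A1e[OF M0 N0] by (simp add: e_def tr_def)
    have oe: "ore_op e" using oA1 M0 N0 by (simp add: e_def ore_mat_def)
    have enz: "e \<noteq> op_zero" using e nz by simp
    have reach1: "reach A1 M N (\<lambda>B. cleared B M N) \<Longrightarrow> reach A M N (\<lambda>B. cleared B M N)"
      by (rule reach_trans[OF oA ounimod_swm[of 0 M i0] ounimod_swm[of 0 N j0] _ _ inv]) (use i0 j0 M0 N0 A1_def in auto)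
    have ex: "\<forall>i. \<exists>q r. 0 < i \<and> i < M \<longrightarrow> ore_op q \<and> ore_op r \<and> A1 i 0 = oadd (op_mult s q e) r \<and> (r = op_zero \<or> deg r < deg e)"
      using left_div[OF _ oe enz] oA1 N0 by (auto simp: ore_mat_def)
    obtain q r where qr0: "\<forall>i. 0 < i \<and> i < M \<longrightarrow> ore_op (q i) \<and> ore_op (r i) \<and> A1 i 0 = oadd (op_mult s (q i) e) (r i) \<and> (r i = op_zero \<or> deg (r i) < deg e)"
      using choice2[OF ex] by (elim exE) blast
    have qr: "\<And>i. 0 < i \<Longrightarrow> i < M \<Longrightarrow> ore_op (q i) \<and> ore_op (r i) \<and> A1 i 0 = oadd (op_mult s (q i) e) (r i) \<and> (r i = op_zero \<or> deg (r i) < deg e)"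
      by (rule qr0[rule_format]) simp
    define A2 where "A2 = mat_mult s (rowop (\<lambda>i. oneg (q i))) A1 M"
    have uR: "ounimod (rowop (\<lambda>i. oneg (q i))) (rowop (\<lambda>i. oneg (oneg (q i)))) M"
      by (rule ounimod_rowop) (use qr M0 in auto)
    have oA2: "ore_mat A2 M N" unfolding A2_def using uR oA1 by (intro ore_mat_mult) (auto simp: ounimod_def)
    have A2e: "A2 i j = (if i = 0 then A1 0 j else oadd (A1 i j) (op_mult s (oneg (q i)) (A1 0 j)))" if "i < M" for i j
      unfolding A2_def using rowop_left[OF that M0] by simp
    have A2c: "A2 i 0 = r i" if "0 < i" "i < M" for i
    proof -
      have "A2 i 0 = oadd (oadd (op_mult s (q i) e) (r i)) (oneg (op_mult s (q i) e))"
        using A2e[OF that(2), of 0] qr[OF that] that by (simp add: e_def op_mult_oneg_left)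
      also have "\<dots> = r i" by (rule ext) simp
      finally show ?thesis .
    qed
    have reach2: "reach A2 M N (\<lambda>B. cleared B M N) \<Longrightarrow> reach A1 M N (\<lambda>B. cleared B M N)"
    proof (rule reach_trans[OF oA1 uR ounimod_id _ _ inv])
      show "mat_eq A2 (mat_mult s (mat_mult s (rowop (\<lambda>i. oneg (q i))) A1 M) mat_id N) M N"
        unfolding A2_def by (rule mat_eq_sym, rule mat_id_right) (use oA2 A2_def ore_laurent_mat in auto)
    qed
    show "reach A M N (\<lambda>B. cleared B M N)"
    proof (cases "\<exists>i. 0 < i \<and> i < M \<and> r i \<noteq> op_zero")
      case True
      then obtain i where i: "0 < i" "i < M" "r i \<noteq> op_zero" by blast
      have "deg (r i) < deg e" using qr[OF i(1,2)] i(3) by blast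
      moreover have "0 \<le> deg (r i)" using ore_deg_nonneg i(3) qr[OF i(1,2)] by blast
      ultimately have "nat (deg (r i)) < nat (deg e)" by (simp add: nat_less_eq_zless)
      then have "nat (deg (r i)) < D" using dg unfolding e by linarith
      then have dD: "nat (deg (A2 i 0)) < D" using A2c[OF i(1,2)] by simp
      have "reach A2 M N (\<lambda>B. cleared B M N)"
        by (rule Suc.IH[rule_format, OF oA2 i(2) N0 _ dD]) (use i A2c[OF i(1,2)] in simp_all)
      then show ?thesis using reach1 reach2 by blast
    next
      case False
      have A2z: "A2 i 0 = op_zero" if "0 < i" "i < M" for i
      proof -
        have "r i = op_zero" using False that by auto
        then show ?thesis using A2c[OF that] by simp
      qed
      have A20: "A2 0 0 = e" using A2e[OF M0, of 0] by (simp add: e_def)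
      have ex': "\<forall>j. \<exists>q r. 0 < j \<and> j < N \<longrightarrow> ore_op q \<and> ore_op r \<and> A2 0 j = oadd (op_mult s e q) r \<and> (r = op_zero \<or> deg r < deg e)"
        using right_div[OF _ oe enz] oA2 M0 by (auto simp: ore_mat_def)
      obtain q' r' where qr0': "\<forall>j. 0 < j \<and> j < N \<longrightarrow> ore_op (q' j) \<and> ore_op (r' j) \<and> A2 0 j = oadd (op_mult s e (q' j)) (r' j) \<and> (r' j = op_zero \<or> deg (r' j) < deg e)"
        using choice2[OF ex'] by (elim exE) blast
      have qr': "\<And>j. 0 < j \<Longrightarrow> j < N \<Longrightarrow> ore_op (q' j) \<and> ore_op (r' j) \<and> A2 0 j = oadd (op_mult s e (q' j)) (r' j) \<and> (r' j = op_zero \<or> deg (r' j) < deg e)"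
        by (rule qr0'[rule_format]) simp
      define A3 where "A3 = mat_mult s A2 (colop (\<lambda>j. oneg (q' j))) N"
      have uC: "ounimod (colop (\<lambda>j. oneg (q' j))) (colop (\<lambda>j. oneg (oneg (q' j)))) N"
        by (rule ounimod_colop) (use qr' N0 in auto)
      have oA3: "ore_mat A3 M N" unfolding A3_def using uC oA2 by (intro ore_mat_mult) (auto simp: ounimod_def)
      have A3e: "A3 i j = (if j = 0 then A2 i 0 else oadd (A2 i j) (op_mult s (A2 i 0) (oneg (q' j))))"
        if "i < M" "j < N" for i j
      proof -
        have l: "\<And>h. h < N \<Longrightarrow> laurent_op (A2 i h)" using oA2 that by (simp add: ore_mat_def ore_laurent)
        show ?thesis unfolding A3_def using colop_right[where A = A2 and q = "\<lambda>j. oneg (q' j)", OF that(2) N0 l] by simp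
      qed
      have A3r: "A3 0 j = r' j" if "0 < j" "j < N" for j
      proof -
        have "A3 0 j = oadd (oadd (op_mult s e (q' j)) (r' j)) (oneg (op_mult s e (q' j)))"
          using A3e[OF M0 that(2)] qr'[OF that] that A20 by (simp add: op_mult_oneg_right)
        also have "\<dots> = r' j" by (rule ext) simp
        finally show ?thesis .
      qed
      have reach3: "reach A3 M N (\<lambda>B. cleared B M N) \<Longrightarrow> reach A2 M N (\<lambda>B. cleared B M N)"
      proof (rule reach_trans[OF oA2 ounimod_id uC _ _ inv])
        show "mat_eq A3 (mat_mult s (mat_mult s mat_id A2 M) (colop (\<lambda>j. oneg (q' j))) N) M N"
          unfolding A3_def by (rule mat_eq_sym, rule mat_mult_cong_left, rule mat_id_left)
      qed
      show ?thesis
      proof (cases "\<exists>j. 0 < j \<and> j < N \<and> r' j \<noteq> op_zero")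
        case True
        then obtain j where j: "0 < j" "j < N" "r' j \<noteq> op_zero" by blast
        have "deg (r' j) < deg e" using qr'[OF j(1,2)] j(3) by blast
        moreover have "0 \<le> deg (r' j)" using ore_deg_nonneg j(3) qr'[OF j(1,2)] by blast
        ultimately have "nat (deg (r' j)) < nat (deg e)" by (simp add: nat_less_eq_zless)
        then have "nat (deg (r' j)) < D" using dg unfolding e by linarith
        then have dD: "nat (deg (A3 0 j)) < D" using A3r[OF j(1,2)] by simp
        have "reach A3 M N (\<lambda>B. cleared B M N)"
          by (rule Suc.IH[rule_format, OF oA3 M0 j(2) _ dD]) (use j A3r[OF j(1,2)] in simp_all)
        then show ?thesis using reach1 reach2 reach3 by blast
      next
        case False
        have c1: "A3 0 0 \<noteq> op_zero" using A3e[OF M0 N0] A20 enz by simp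
        have c2: "A3 i 0 = op_zero" if "0 < i" "i < M" for i using A3e[OF that(2) N0] A2z[OF that] by simp
        have c3: "A3 0 j = op_zero" if "0 < j" "j < N" for j
        proof -
          have "r' j = op_zero" using False that by auto
          then show ?thesis using A3r[OF that] by simp
        qed
        have "cleared A3 M N"
          unfolding cleared_def using c1 c2 c3 by blast
        then have "reach A3 M N (\<lambda>B. cleared B M N)" by (rule reach_refl[OF oA3 inv])
        then show ?thesis using reach1 reach2 reach3 by blast
      qed
    qed
  qed
qed

lemma step:
  assumes "ore_mat A M N" "i0 < M" "j0 < N" "A i0 j0 \<noteq> op_zero"
  shows "reach A M N (\<lambda>B. cleared B M N)"
  using step_main[of M N "Suc (nat (deg (A i0 j0)))"] assms by blast

end

definition blk :: "'k::zero op \<Rightarrow> 'k opmat \<Rightarrow> 'k opmat" where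
  "blk c X = (\<lambda>i j. if i = 0 \<and> j = 0 then c else if i = 0 \<or> j = 0 then op_zero else X (i - 1) (j - 1))"

definition dmat :: "(nat \<Rightarrow> 'k::zero op) \<Rightarrow> nat \<Rightarrow> 'k opmat" where
  "dmat d r = (\<lambda>i j. if i = j \<and> i < r then d i else op_zero)"

lemma osum_lessThan_Suc: "osum F {..<Suc k} = oadd (F 0) (osum (\<lambda>h. F (Suc h)) {..<k})"
  by (rule ext) (simp only: osum_apply oadd_apply sum.lessThan_Suc_shift)

lemma osum_const_zero[simp]: "osum (\<lambda>h. op_zero) J = op_zero"
  by (rule ext) simp

lemma blk_cong: "mat_eq X X' m n \<Longrightarrow> mat_eq (blk c X) (blk c X') (Suc m) (Suc n)"
  by (auto simp: mat_eq_def blk_def)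

lemma blk_id: "blk op_one mat_id = mat_id"
  by (rule ext, rule ext) (auto simp: blk_def mat_id_def)

lemma ore_blk: "ore_op c \<Longrightarrow> ore_mat X m n \<Longrightarrow> ore_mat (blk c X) (Suc m) (Suc n)"
  by (auto simp: ore_mat_def blk_def)

lemma blk_dmat: "blk c (dmat d r) = dmat (\<lambda>i. if i = 0 then c else d (i - 1)) (Suc r)"
  by (rule ext, rule ext) (auto simp: blk_def dmat_def)

lemma cleared_blk:
  assumes "cleared B (Suc m) (Suc n)"
  shows "mat_eq B (blk (B 0 0) (\<lambda>i j. B (Suc i) (Suc j))) (Suc m) (Suc n)"
  using assms unfolding mat_eq_def cleared_def blk_def
  by (auto simp: not_less_eq less_Suc_eq_0_disj)

context aut begin

lemma blk_mult: "mat_mult s (blk a X) (blk b Y) (Suc k) i j = blk (op_mult s a b) (mat_mult s X Y k) i j"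
  by (cases i; cases j) (simp_all add: blk_def mm_eq osum_lessThan_Suc)

lemma ounimod_blk:
  assumes "ounimod P Pv m" shows "ounimod (blk op_one P) (blk op_one Pv) (Suc m)"
proof -
  have "mat_eq (mat_mult s (blk op_one P) (blk op_one Pv) (Suc m)) mat_id (Suc m) (Suc m)"
    if "mat_eq (mat_mult s P Pv m) mat_id m m" for P Pv
  proof -
    have "mat_mult s (blk op_one P) (blk op_one Pv) (Suc m) = blk op_one (mat_mult s P Pv m)"
      by (rule ext, rule ext) (simp add: blk_mult)
    moreover have "mat_eq (blk op_one (mat_mult s P Pv m)) (blk op_one mat_id) (Suc m) (Suc m)"
      by (rule blk_cong[OF that])
    ultimately show ?thesis by (simp add: blk_id)
  qed
  then show ?thesis using assms
    by (auto simp: ounimod_def is_inverse_def intro: ore_blk)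
qed

definition dprop :: "nat \<Rightarrow> nat \<Rightarrow> 'k opmat \<Rightarrow> bool" where
  "dprop m n B \<longleftrightarrow> (\<exists>r d. r \<le> m \<and> r \<le> n \<and> (\<forall>i<r. ore_op (d i) \<and> d i \<noteq> op_zero) \<and> mat_eq B (dmat d r) m n)"

lemma inv_dprop: "inv_pred (dprop m n) m n"
  unfolding inv_pred_def dprop_def by (meson mat_eq_sym mat_eq_trans)

lemma diag_form: "ore_mat A m n \<Longrightarrow> reach A m n (dprop m n)"
proof (induction m arbitrary: n A)
  case 0
  have "dprop 0 n A" unfolding dprop_def by (intro exI[of _ 0]) (auto simp: mat_eq_def)
  then show ?case by (rule reach_refl[OF 0 inv_dprop])
next
  case (Suc m)
  show ?case
  proof (cases "\<forall>i<Suc m. \<forall>j<n. A i j = op_zero")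
    case True
    have "dprop (Suc m) n A" unfolding dprop_def
      by (intro exI[of _ 0]) (use True in \<open>auto simp: mat_eq_def dmat_def\<close>)
    then show ?thesis by (rule reach_refl[OF Suc.prems inv_dprop])
  next
    case False
    then obtain i0 j0 where ij: "i0 < Suc m" "j0 < n" "A i0 j0 \<noteq> op_zero" by blast
    then obtain n' where n': "n = Suc n'" by (cases n) auto
    obtain P1 Pv1 Q1 Qv1 where r: "ounimod P1 Pv1 (Suc m)" "ounimod Q1 Qv1 n"
      "cleared (mat_mult s (mat_mult s P1 A (Suc m)) Q1 n) (Suc m) n"
      using step[OF Suc.prems ij] unfolding reach_def by blast
    define B where "B = mat_mult s (mat_mult s P1 A (Suc m)) Q1 n"
    have oB: "ore_mat B (Suc m) n" unfolding B_def using r Suc.prems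
      by (intro ore_mat_mult) (auto simp: ounimod_def)
    define A' where "A' = (\<lambda>i j. B (Suc i) (Suc j))"
    have oA': "ore_mat A' m n'" using oB n' by (simp add: ore_mat_def A'_def)
    have ob: "ore_op (B 0 0)" using oB n' by (simp add: ore_mat_def)
    obtain P' Pv' Q' Qv' where r': "ounimod P' Pv' m" "ounimod Q' Qv' n'"
      "dprop m n' (mat_mult s (mat_mult s P' A' m) Q' n')"
      using Suc.IH[OF oA'] unfolding reach_def by blast
    obtain r0 d0 where d0: "r0 \<le> m" "r0 \<le> n'" "\<forall>i<r0. ore_op (d0 i) \<and> d0 i \<noteq> op_zero"
      "mat_eq (mat_mult s (mat_mult s P' A' m) Q' n') (dmat d0 r0) m n'"
      using r'(3) unfolding dprop_def by blast
    have cl: "mat_eq B (blk (B 0 0) A') (Suc m) n"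
      using cleared_blk[of B m n'] r(3) n' by (simp add: B_def A'_def)
    have e1: "mat_eq (mat_mult s (mat_mult s (blk op_one P') B (Suc m)) (blk op_one Q') n)
                     (mat_mult s (mat_mult s (blk op_one P') (blk (B 0 0) A') (Suc m)) (blk op_one Q') n) (Suc m) n"
      by (intro mat_mult_cong_left mat_mult_cong_right cl)
    have m1: "mat_mult s (blk op_one P') (blk (B 0 0) A') (Suc m) = blk (B 0 0) (mat_mult s P' A' m)"
      by (rule ext, rule ext) (simp add: blk_mult)
    have e2: "mat_mult s (mat_mult s (blk op_one P') (blk (B 0 0) A') (Suc m)) (blk op_one Q') n
            = blk (B 0 0) (mat_mult s (mat_mult s P' A' m) Q' n')"
      unfolding m1 n' by (rule ext, rule ext) (simp add: blk_mult op_mult_one_right[OF ore_laurent[OF ob]])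
    have e3: "mat_eq (blk (B 0 0) (mat_mult s (mat_mult s P' A' m) Q' n')) (dmat (\<lambda>i. if i = 0 then B 0 0 else d0 (i - 1)) (Suc r0)) (Suc m) n"
      using blk_cong[OF d0(4), of "B 0 0"] n' by (simp add: blk_dmat)
    have nz: "B 0 0 \<noteq> op_zero" using r(3) by (simp add: B_def cleared_def)
    have "dprop (Suc m) n (mat_mult s (mat_mult s (blk op_one P') B (Suc m)) (blk op_one Q') n)"
      unfolding dprop_def
      apply (rule exI[of _ "Suc r0"], rule exI[of _ "\<lambda>i. if i = 0 then B 0 0 else d0 (i - 1)"])
      using e1 e2 e3 d0 n' nz ob by (auto intro: mat_eq_trans)
    then have "reach B (Suc m) n (dprop (Suc m) n)"
      unfolding reach_def using ounimod_blk[OF r'(1)] ounimod_blk[OF r'(2)] n' by blast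
    then show ?thesis
      by (rule reach_trans[OF Suc.prems r(1) r(2) _ _ inv_dprop, rotated]) (simp add: B_def)
  qed
qed

end




lemma indep_def2: "left_lin_indep s A S n \<longleftrightarrow>
   (\<forall>u. (\<forall>i\<in>S. ore_op (u i)) \<and> (\<forall>j<n. osum (\<lambda>i. op_mult s (u i) (A i j)) S = op_zero) \<longrightarrow> (\<forall>i\<in>S. u i = op_zero))"
  by (simp add: left_lin_indep_def osum_def)

lemma indep_empty: "left_lin_indep s A {} n" by (simp add: left_lin_indep_def)

lemma rank_set_finite: "finite {card S | S. S \<subseteq> {..<m} \<and> left_lin_indep s A S n}"
proof -
  have "{card S | S. S \<subseteq> {..<m} \<and> left_lin_indep s A S n} \<subseteq> card ` Pow {..<m}" by auto
  then show ?thesis by (rule finite_subset) simp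
qed

lemma in_rank_set: "S \<subseteq> {..<m} \<Longrightarrow> left_lin_indep s A S n \<Longrightarrow> card S \<in> {card S | S. S \<subseteq> {..<m} \<and> left_lin_indep s A S n}"
  by (rule CollectI, rule exI[of _ S]) simp

lemma rank_eqI:
  assumes "S0 \<subseteq> {..<m}" "left_lin_indep s A S0 n" "card S0 = r"
    "\<And>S. S \<subseteq> {..<m} \<Longrightarrow> left_lin_indep s A S n \<Longrightarrow> card S \<le> r"
  shows "op_rank s A m n = r"
  unfolding op_rank_def
proof (rule Max_eqI[OF rank_set_finite])
  fix y assume "y \<in> {card S | S. S \<subseteq> {..<m} \<and> left_lin_indep s A S n}"
  then obtain S where "y = card S" "S \<subseteq> {..<m}" "left_lin_indep s A S n" by (elim CollectE exE conjE)
  then show "y \<le> r" using assms(4) by simp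
next
  show "r \<in> {card S | S. S \<subseteq> {..<m} \<and> left_lin_indep s A S n}"
    using in_rank_set[OF assms(1,2)] assms(3) by simp
qed

lemma max_indep:
  "\<exists>T. T \<subseteq> {..<m} \<and> left_lin_indep s A T n \<and> (\<forall>S. S \<subseteq> {..<m} \<longrightarrow> left_lin_indep s A S n \<longrightarrow> card S \<le> card T)"
proof -
  let ?C = "{card S | S. S \<subseteq> {..<m} \<and> left_lin_indep s A S n}"
  have ne: "?C \<noteq> {}" using in_rank_set[of "{}" m s A n] indep_empty[of s A n] by auto
  have "Max ?C \<in> ?C" by (rule Max_in[OF rank_set_finite ne])
  then obtain T where T: "Max ?C = card T" "T \<subseteq> {..<m}" "left_lin_indep s A T n" by (elim CollectE exE conjE)
  have "card S \<le> card T" if "S \<subseteq> {..<m}" "left_lin_indep s A S n" for S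
    using Max_ge[OF rank_set_finite in_rank_set[OF that]] T(1) by simp
  then show ?thesis using T(2,3) by blast
qed

lemma indep_cong:
  assumes "mat_eq A A' m n" "S \<subseteq> {..<m}"
  shows "left_lin_indep s A S n \<longleftrightarrow> left_lin_indep s A' S n"
proof -
  have "\<And>u j. j < n \<Longrightarrow> osum (\<lambda>i. op_mult s (u i) (A i j)) S = osum (\<lambda>i. op_mult s (u i) (A' i j)) S"
    using assms by (intro osum_cong) (auto simp: mat_eq_def)
  then show ?thesis unfolding indep_def2 by simp
qed

context aut begin

lemma indep_subset:
  assumes "finite S" "left_lin_indep s A S n" "T \<subseteq> S"
  shows "left_lin_indep s A T n"
  unfolding indep_def2
proof (intro allI impI)
  fix u assume u: "(\<forall>i\<in>T. ore_op (u i)) \<and> (\<forall>j<n. osum (\<lambda>i. op_mult s (u i) (A i j)) T = op_zero)"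
  define u' where "u' i = (if i \<in> T then u i else op_zero)" for i
  have "osum (\<lambda>i. op_mult s (u' i) (A i j)) S = osum (\<lambda>i. op_mult s (u i) (A i j)) T" for j
  proof (rule ext)
    fix d
    show "osum (\<lambda>i. op_mult s (u' i) (A i j)) S d = osum (\<lambda>i. op_mult s (u i) (A i j)) T d"
      unfolding osum_apply
      by (rule sum.mono_neutral_cong_right[OF assms(1) assms(3)]) (auto simp: u'_def)
  qed
  moreover have "\<forall>i\<in>S. ore_op (u' i)" using u by (simp add: u'_def)
  ultimately have "\<forall>i\<in>S. u' i = op_zero"
    using assms(2) u unfolding indep_def2 by (elim allE[of _ u'] impE) auto
  then show "\<forall>i\<in>T. u i = op_zero"
  proof (intro ballI)
    fix i assume z: "\<forall>i\<in>S. u' i = op_zero" and i: "i \<in> T"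
    then have "u' i = op_zero" using assms(3) by blast
    then show "u i = op_zero" using i by (simp add: u'_def)
  qed
qed

lemma osum_comp:
  assumes "finite I" "finite T" "\<And>i. i \<in> I \<Longrightarrow> laurent_op (g i)" "\<And>i h. i \<in> I \<Longrightarrow> h \<in> T \<Longrightarrow> laurent_op (w i h)"
  shows "osum (\<lambda>i. op_mult s (g i) (osum (\<lambda>h. op_mult s (w i h) (X h)) T)) I
       = osum (\<lambda>h. op_mult s (osum (\<lambda>i. op_mult s (g i) (w i h)) I) (X h)) T"
proof -
  have "osum (\<lambda>i. op_mult s (g i) (osum (\<lambda>h. op_mult s (w i h) (X h)) T)) I
      = osum (\<lambda>i. osum (\<lambda>h. op_mult s (op_mult s (g i) (w i h)) (X h)) T) I"
  proof (intro osum_cong)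
    fix i assume i: "i \<in> I"
    show "op_mult s (g i) (osum (\<lambda>h. op_mult s (w i h) (X h)) T) = osum (\<lambda>h. op_mult s (op_mult s (g i) (w i h)) (X h)) T"
      unfolding op_mult_osum_right by (intro osum_cong op_mult_assoc[symmetric]) (use assms i in auto)
  qed
  also have "\<dots> = osum (\<lambda>h. osum (\<lambda>i. op_mult s (op_mult s (g i) (w i h)) (X h)) I) T"
    by (rule osum_swap[symmetric])
  also have "\<dots> = osum (\<lambda>h. op_mult s (osum (\<lambda>i. op_mult s (g i) (w i h)) I) (X h)) T"
    by (intro osum_cong, rule op_mult_osum_left[symmetric]) (use assms in auto)
  finally show ?thesis .
qed

lemma mult_clear:
  assumes "finite I" "\<And>i. i \<in> I \<Longrightarrow> ore_op (z i)" "\<And>i. i \<in> I \<Longrightarrow> ore_op (v i)" "\<And>i. i \<in> I \<Longrightarrow> v i \<noteq> op_zero"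
  shows "\<exists>c g. ore_op c \<and> c \<noteq> op_zero \<and> (\<forall>i\<in>I. ore_op (g i) \<and> op_mult s c (z i) = op_mult s (g i) (v i))"
  using assms
proof (induction I rule: finite_induct)
  case empty
  show ?case by (rule exI[of _ op_one], rule exI[of _ "\<lambda>_. op_zero"]) (simp add: one_nz one_nz[unfolded op_zero_def])
next
  case (insert i0 I)
  obtain c g where cg: "ore_op c" "c \<noteq> op_zero" "\<forall>i\<in>I. ore_op (g i) \<and> op_mult s c (z i) = op_mult s (g i) (v i)"
    using insert.IH[OF insert.prems(1-3)[OF insertI2]] by blast
  have oa: "ore_op (op_mult s c (z i0))" using cg(1) insert.prems by simp
  obtain x y where xy: "ore_op x" "ore_op y" "y \<noteq> op_zero" "op_mult s y (op_mult s c (z i0)) = op_mult s x (v i0)"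
    using ore_condition[OF oa, of "v i0"] insert.prems by auto
  define g' where "g' i = (if i = i0 then x else op_mult s y (g i))" for i
  have "op_mult s (op_mult s y c) (z i) = op_mult s (g' i) (v i) \<and> ore_op (g' i)" if "i \<in> insert i0 I" for i
  proof (cases "i = i0")
    case True
    then show ?thesis using xy cg op_mult_assoc[OF ore_laurent[OF xy(2)] ore_laurent[OF cg(1)]] by (simp add: g'_def)
  next
    case False
    then have i: "i \<in> I" using that by simp
    have "op_mult s (op_mult s y c) (z i) = op_mult s y (op_mult s (g i) (v i))"
      using cg(3) i op_mult_assoc[OF ore_laurent[OF xy(2)] ore_laurent[OF cg(1)]] by simp
    also have "\<dots> = op_mult s (g' i) (v i)"
      using False cg(3) i op_mult_assoc[OF ore_laurent[OF xy(2)] ore_laurent, of "g i"] by (simp add: g'_def)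
    finally show ?thesis using False cg(3) i xy by (simp add: g'_def)
  qed
  moreover have "op_mult s y c \<noteq> op_zero"
    using mult_nonzero(1)[OF ore_laurent[OF xy(2)] ore_laurent[OF cg(1)] xy(3) cg(2)] .
  ultimately show ?case using xy cg by (intro exI[of _ "op_mult s y c"] exI[of _ g']) auto
qed

end

context aut begin

lemma osum_insert: "finite S \<Longrightarrow> s0 \<notin> S \<Longrightarrow> osum F (insert s0 S) = oadd (F s0) (osum F S)"
  by (rule ext) simp

lemma dep_key:
  assumes fS': "finite S'" and s0: "s0 \<notin> S'"
    and l: "\<And>p. p \<in> S' \<Longrightarrow> laurent_op (e' p) \<and> laurent_op (x p) \<and> laurent_op (y p)"
    and la: "laurent_op (a s0 h)"
  shows "osum (\<lambda>p. op_mult s (if p = s0 then oneg (osum (\<lambda>p. op_mult s (e' p) (x p)) S') else op_mult s (e' p) (y p)) (a p h)) (insert s0 S')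
       = osum (\<lambda>p. op_mult s (e' p) (oadd (op_mult s (y p) (a p h)) (oneg (op_mult s (x p) (a s0 h))))) S'"
    (is "?L = ?R")
proof -
  have f0: "op_mult s (oneg (osum (\<lambda>p. op_mult s (e' p) (x p)) S')) (a s0 h)
      = oneg (osum (\<lambda>p. op_mult s (e' p) (op_mult s (x p) (a s0 h))) S')"
    unfolding op_mult_oneg_left
    by (subst op_mult_osum_left) (use fS' l in \<open>auto intro!: osum_cong op_mult_assoc simp: op_mult_assoc\<close>)
  have "?L = oadd (oneg (osum (\<lambda>p. op_mult s (e' p) (op_mult s (x p) (a s0 h))) S'))
                  (osum (\<lambda>p. op_mult s (e' p) (op_mult s (y p) (a p h))) S')"
    unfolding osum_insert[OF fS' s0] f0[symmetric]
  proof (rule arg_cong2[where f = oadd])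
    show "osum (\<lambda>p. op_mult s (if p = s0 then oneg (osum (\<lambda>p. op_mult s (e' p) (x p)) S') else op_mult s (e' p) (y p)) (a p h)) S'
        = osum (\<lambda>p. op_mult s (e' p) (op_mult s (y p) (a p h))) S'"
      by (rule osum_cong) (use s0 l in \<open>auto simp: op_mult_assoc\<close>)
  qed simp
  also have "\<dots> = ?R"
    by (rule ext) (simp add: op_mult_oadd_right op_mult_oneg_right sum.distrib sum_subtractf)
  finally show ?thesis .
qed

lemma dependence:
  assumes "finite T" "finite S" "card T < card S" "\<forall>p\<in>S. \<forall>h\<in>T. ore_op (a p h)"
  shows "\<exists>e. (\<forall>p\<in>S. ore_op (e p)) \<and> (\<exists>p\<in>S. e p \<noteq> op_zero) \<and> (\<forall>h\<in>T. osum (\<lambda>p. op_mult s (e p) (a p h)) S = op_zero)"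
  using assms
proof (induction T arbitrary: S a rule: finite_induct)
  case empty
  then obtain s0 where s0: "s0 \<in> S" by fastforce
  show ?case
    by (rule exI[of _ "\<lambda>p. if p = s0 then op_one else op_zero"]) (use s0 in \<open>auto simp: one_nz one_nz[unfolded op_zero_def]\<close>)
next
  case (insert h0 T)
  have cT: "card T < card S" using insert.prems(2) insert.hyps by simp
  have oT: "\<forall>p\<in>S. \<forall>h\<in>T. ore_op (a p h)" using insert.prems(3) by blast
  show ?case
  proof (cases "\<forall>p\<in>S. a p h0 = op_zero")
    case True
    obtain e where e: "\<forall>p\<in>S. ore_op (e p)" "\<exists>p\<in>S. e p \<noteq> op_zero" "\<forall>h\<in>T. osum (\<lambda>p. op_mult s (e p) (a p h)) S = op_zero"
      using insert.IH[OF insert.prems(1) cT oT] by blast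
    have "osum (\<lambda>p. op_mult s (e p) (a p h0)) S = op_zero"
    proof -
      have "osum (\<lambda>p. op_mult s (e p) (a p h0)) S = osum (\<lambda>p. op_zero) S"
        by (rule osum_cong) (use True in simp)
      then show ?thesis by simp
    qed
    then have "\<forall>h\<in>insert h0 T. osum (\<lambda>p. op_mult s (e p) (a p h)) S = op_zero" using e(3) by blast
    then show ?thesis using e(1,2) by blast
  next
    case False
    then obtain s0 where s0: "s0 \<in> S" "a s0 h0 \<noteq> op_zero" by blast
    define S' where "S' = S - {s0}"
    have fS': "finite S'" using insert.prems(1) by (simp add: S'_def)
    have s0S': "s0 \<notin> S'" and SS': "S = insert s0 S'" using s0 by (auto simp: S'_def)
    have cS': "card T < card S'" using insert.prems(2) insert.hyps s0 insert.prems(1) by (simp add: S'_def)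
    have oa0: "ore_op (a s0 h0)" using insert.prems(3) s0 by blast
    have ex: "\<forall>p. \<exists>x y. p \<in> S' \<longrightarrow> ore_op x \<and> ore_op y \<and> y \<noteq> op_zero \<and> op_mult s y (a p h0) = op_mult s x (a s0 h0)"
      using ore_condition[OF _ oa0 s0(2)] insert.prems(3) by (auto simp: S'_def)
    obtain x y where xy0: "\<forall>p. p \<in> S' \<longrightarrow> ore_op (x p) \<and> ore_op (y p) \<and> y p \<noteq> op_zero \<and> op_mult s (y p) (a p h0) = op_mult s (x p) (a s0 h0)"
      using choice2[OF ex] by (elim exE) blast
    have xy: "ore_op (x p)" "ore_op (y p)" "y p \<noteq> op_zero" "op_mult s (y p) (a p h0) = op_mult s (x p) (a s0 h0)"
      if "p \<in> S'" for p using xy0 that by blast+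
    define b where "b p h = oadd (op_mult s (y p) (a p h)) (oneg (op_mult s (x p) (a s0 h)))" for p h
    have ob: "\<forall>p\<in>S'. \<forall>h\<in>T. ore_op (b p h)"
      using xy insert.prems(3) s0 by (auto simp: b_def S'_def)
    obtain e' where e': "\<forall>p\<in>S'. ore_op (e' p)" "\<exists>p\<in>S'. e' p \<noteq> op_zero" "\<forall>h\<in>T. osum (\<lambda>p. op_mult s (e' p) (b p h)) S' = op_zero"
      using insert.IH[OF fS' cS' ob] by blast
    define e where "e p = (if p = s0 then oneg (osum (\<lambda>p. op_mult s (e' p) (x p)) S') else op_mult s (e' p) (y p))" for p
    have key: "osum (\<lambda>p. op_mult s (e p) (a p h)) S = osum (\<lambda>p. op_mult s (e' p) (b p h)) S'" if "h \<in> insert h0 T" for h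
      unfolding SS' e_def b_def
      by (rule dep_key[OF fS' s0S']) (use xy e' insert.prems(3) s0 that in \<open>auto simp: ore_laurent\<close>)
    have z: "osum (\<lambda>p. op_mult s (e p) (a p h)) S = op_zero" if "h \<in> insert h0 T" for h
    proof (cases "h = h0")
      case True
      have "osum (\<lambda>p. op_mult s (e' p) (b p h)) S' = osum (\<lambda>p. op_zero) S'"
        by (rule osum_cong) (use True xy in \<open>simp add: b_def\<close>)
      then show ?thesis using key[OF that] by simp
    next
      case False
      then show ?thesis using key[OF that] e'(3) that by simp
    qed
    obtain s1 where s1: "s1 \<in> S'" "e' s1 \<noteq> op_zero" using e'(2) by blast
    have "e s1 \<noteq> op_zero"
      using mult_nonzero(1)[OF ore_laurent ore_laurent s1(2) xy(3)[OF s1(1)]] e'(1) xy(2) s1 s0S'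
      by (auto simp: e_def)
    moreover have "\<forall>p\<in>S. ore_op (e p)"
      using e'(1) xy fS' by (auto simp: e_def SS')
    ultimately show ?thesis using z s1 SS' by (intro exI[of _ e]) auto
  qed
qed

end


context aut begin

lemma row_rep:
  assumes oX: "ore_mat X m n" and T: "T \<subseteq> {..<m}" "left_lin_indep s X T n"
    and maxT: "\<And>S. S \<subseteq> {..<m} \<Longrightarrow> left_lin_indep s X S n \<Longrightarrow> card S \<le> card T"
    and i: "i < m"
  shows "\<exists>v w. ore_op v \<and> v \<noteq> op_zero \<and> (\<forall>h\<in>T. ore_op (w h)) \<and>
           (\<forall>j<n. op_mult s v (X i j) = osum (\<lambda>h. op_mult s (w h) (X h j)) T)"
proof (cases "i \<in> T")
  case True
  have fT: "finite T" using T(1) finite_subset by blast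
  have "op_mult s op_one (X i j) = osum (\<lambda>h. op_mult s (if h = i then op_one else op_zero) (X h j)) T" for j
  proof -
    have "osum (\<lambda>h. op_mult s (if h = i then op_one else op_zero) (X h j)) T = osum (\<lambda>h. if h = i then X h j else op_zero) T"
      by (rule osum_cong) simp
    also have "\<dots> = X i j" using fT True by (simp add: osum_delta)
    finally show ?thesis by simp
  qed
  then show ?thesis
    by (intro exI[of _ op_one] exI[of _ "\<lambda>h. if h = i then op_one else op_zero"]) (simp add: one_nz)
next
  case False
  have fT: "finite T" using T(1) finite_subset by blast
  have "card (insert i T) > card T" using False fT by simp
  then have "\<not> left_lin_indep s X (insert i T) n" using maxT[of "insert i T"] T(1) i by fastforce
  then obtain u where u: "\<forall>p\<in>insert i T. ore_op (u p)" "\<forall>j<n. osum (\<lambda>p. op_mult s (u p) (X p j)) (insert i T) = op_zero"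
    "\<exists>p\<in>insert i T. u p \<noteq> op_zero"
    unfolding indep_def2 by blast
  have split: "osum (\<lambda>p. op_mult s (u p) (X p j)) (insert i T) = oadd (op_mult s (u i) (X i j)) (osum (\<lambda>p. op_mult s (u p) (X p j)) T)" for j
    using osum_insert[OF fT False] .
  have ui: "u i \<noteq> op_zero"
  proof
    assume z: "u i = op_zero"
    then have "\<forall>j<n. osum (\<lambda>p. op_mult s (u p) (X p j)) T = op_zero" using u(2) split by simp
    then have "\<forall>p\<in>T. u p = op_zero" using T(2) u(1) unfolding indep_def2 by blast
    then show False using u(3) z by blast
  qed
  have "op_mult s (u i) (X i j) = osum (\<lambda>h. op_mult s (oneg (u h)) (X h j)) T" if "j < n" for j
  proof -
    have e: "oadd (op_mult s (u i) (X i j)) (osum (\<lambda>p. op_mult s (u p) (X p j)) T) = op_zero"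
      using u(2) split that by simp
    show ?thesis
    proof (rule ext)
      fix d
      have "op_mult s (u i) (X i j) d + osum (\<lambda>p. op_mult s (u p) (X p j)) T d = 0"
        using fun_cong[OF e, of d] by simp
      then show "op_mult s (u i) (X i j) d = osum (\<lambda>h. op_mult s (oneg (u h)) (X h j)) T d"
        by (simp add: op_mult_oneg_left sum_negf eq_neg_iff_add_eq_0)
    qed
  qed
  then show ?thesis using u(1) ui
    by (intro exI[of _ "u i"] exI[of _ "\<lambda>h. oneg (u h)"]) auto
qed

lemma span_indep:
  assumes oX: "ore_mat X m n" and oZ: "ore_mat Z m' m" and YZ: "mat_eq Y (mat_mult s Z X m) m' n"
    and S': "S' \<subseteq> {..<m'}" "left_lin_indep s Y S' n"
  shows "\<exists>S. S \<subseteq> {..<m} \<and> left_lin_indep s X S n \<and> card S = card S'"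
proof -
  obtain T where T: "T \<subseteq> {..<m}" "left_lin_indep s X T n"
    and maxT: "\<And>S. S \<subseteq> {..<m} \<Longrightarrow> left_lin_indep s X S n \<Longrightarrow> card S \<le> card T"
    using max_indep[of m s X n] by blast
  have fT: "finite T" using T(1) finite_subset by blast
  have fS': "finite S'" using S'(1) finite_subset by blast
  show ?thesis
  proof (cases "card S' \<le> card T")
    case True
    then obtain S where "S \<subseteq> T" "card S = card S'" using obtain_subset_with_card_n by metis
    then show ?thesis using indep_subset[OF fT T(2)] T(1) by blast
  next
    case False
    then have lt: "card T < card S'" by simp
    have ex1: "\<forall>i. \<exists>v w. i < m \<longrightarrow> ore_op v \<and> v \<noteq> op_zero \<and> (\<forall>h\<in>T. ore_op (w h)) \<and>
           (\<forall>j<n. op_mult s v (X i j) = osum (\<lambda>h. op_mult s (w h) (X h j)) T)"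
      using row_rep[OF oX T maxT] by blast
    obtain v w where vw0: "\<forall>i. i < m \<longrightarrow> ore_op (v i) \<and> v i \<noteq> op_zero \<and> (\<forall>h\<in>T. ore_op (w i h)) \<and>
           (\<forall>j<n. op_mult s (v i) (X i j) = osum (\<lambda>h. op_mult s (w i h) (X h j)) T)"
      using choice2[OF ex1] by (elim exE) blast
    have vw: "ore_op (v i)" "v i \<noteq> op_zero" "\<And>h. h \<in> T \<Longrightarrow> ore_op (w i h)"
      "\<And>j. j < n \<Longrightarrow> op_mult s (v i) (X i j) = osum (\<lambda>h. op_mult s (w i h) (X h j)) T"
      if "i < m" for i using vw0 that by blast+
    have lX: "\<And>i j. i < m \<Longrightarrow> j < n \<Longrightarrow> laurent_op (X i j)" using oX by (simp add: ore_mat_def ore_laurent)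
    have ex2: "\<forall>p. \<exists>c a. p \<in> S' \<longrightarrow> ore_op c \<and> c \<noteq> op_zero \<and> (\<forall>h\<in>T. ore_op (a h)) \<and>
           (\<forall>j<n. op_mult s c (Y p j) = osum (\<lambda>h. op_mult s (a h) (X h j)) T)"
    proof (intro allI impI)
      fix p
      show "\<exists>c a. p \<in> S' \<longrightarrow> ore_op c \<and> c \<noteq> op_zero \<and> (\<forall>h\<in>T. ore_op (a h)) \<and>
           (\<forall>j<n. op_mult s c (Y p j) = osum (\<lambda>h. op_mult s (a h) (X h j)) T)"
      proof (cases "p \<in> S'")
        case False then show ?thesis by blast
      next
        case True
        then have p: "p < m'" using S'(1) by blast
        obtain c g where cg: "ore_op c" "c \<noteq> op_zero" "\<forall>i\<in>{..<m}. ore_op (g i) \<and> op_mult s c (Z p i) = op_mult s (g i) (v i)"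
          using mult_clear[of "{..<m}" "\<lambda>i. Z p i" v] oZ p vw by (auto simp: ore_mat_def)
        have "op_mult s c (Y p j) = osum (\<lambda>h. op_mult s (osum (\<lambda>i. op_mult s (g i) (w i h)) {..<m}) (X h j)) T"
          if j: "j < n" for j
        proof -
          have "op_mult s c (Y p j) = op_mult s c (osum (\<lambda>i. op_mult s (Z p i) (X i j)) {..<m})"
            using YZ p j by (simp add: mat_eq_def mm_eq)
          also have "\<dots> = osum (\<lambda>i. op_mult s (g i) (op_mult s (v i) (X i j))) {..<m}"
            unfolding op_mult_osum_right
          proof (rule osum_cong)
            fix i assume i: "i \<in> {..<m}"
            have "op_mult s c (op_mult s (Z p i) (X i j)) = op_mult s (op_mult s c (Z p i)) (X i j)"
              using op_mult_assoc[OF ore_laurent[OF cg(1)], of "Z p i"] oZ p i by (simp add: ore_mat_def ore_laurent)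
            also have "\<dots> = op_mult s (g i) (op_mult s (v i) (X i j))"
              using cg(3) i op_mult_assoc[OF ore_laurent ore_laurent, of "g i" "v i"] vw(1) by auto
            finally show "op_mult s c (op_mult s (Z p i) (X i j)) = op_mult s (g i) (op_mult s (v i) (X i j))" .
          qed
          also have "\<dots> = osum (\<lambda>i. op_mult s (g i) (osum (\<lambda>h. op_mult s (w i h) (X h j)) T)) {..<m}"
            by (rule osum_cong) (use vw(4) j in auto)
          also have "\<dots> = osum (\<lambda>h. op_mult s (osum (\<lambda>i. op_mult s (g i) (w i h)) {..<m}) (X h j)) T"
            by (rule osum_comp) (use fT cg vw(3) in \<open>auto simp: ore_laurent\<close>)
          finally show ?thesis .
        qed
        moreover have "\<forall>h\<in>T. ore_op (osum (\<lambda>i. op_mult s (g i) (w i h)) {..<m})"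
          using cg vw(3) by (auto intro!: ore_osum ore_mult)
        ultimately show ?thesis using cg
          by (intro exI[of _ c] exI[of _ "\<lambda>h. osum (\<lambda>i. op_mult s (g i) (w i h)) {..<m}"]) blast
      qed
    qed
    obtain c a where ca0: "\<forall>p. p \<in> S' \<longrightarrow> ore_op (c p) \<and> c p \<noteq> op_zero \<and> (\<forall>h\<in>T. ore_op (a p h)) \<and>
           (\<forall>j<n. op_mult s (c p) (Y p j) = osum (\<lambda>h. op_mult s (a p h) (X h j)) T)"
      using choice2[OF ex2] by (elim exE) blast
    have ca: "ore_op (c p)" "c p \<noteq> op_zero" "\<And>h. h \<in> T \<Longrightarrow> ore_op (a p h)"
      "\<And>j. j < n \<Longrightarrow> op_mult s (c p) (Y p j) = osum (\<lambda>h. op_mult s (a p h) (X h j)) T"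
      if "p \<in> S'" for p using ca0 that by blast+
    obtain e where e: "\<forall>p\<in>S'. ore_op (e p)" "\<exists>p\<in>S'. e p \<noteq> op_zero"
      "\<forall>h\<in>T. osum (\<lambda>p. op_mult s (e p) (a p h)) S' = op_zero"
      using dependence[OF fT fS' lt, of a] ca(3) by blast
    have comb: "osum (\<lambda>p. op_mult s (op_mult s (e p) (c p)) (Y p j)) S' = op_zero" if j: "j < n" for j
    proof -
      have "osum (\<lambda>p. op_mult s (op_mult s (e p) (c p)) (Y p j)) S'
          = osum (\<lambda>p. op_mult s (e p) (osum (\<lambda>h. op_mult s (a p h) (X h j)) T)) S'"
        by (rule osum_cong) (use e(1) ca j in \<open>simp add: op_mult_assoc ore_laurent\<close>)
      also have "\<dots> = osum (\<lambda>h. op_mult s (osum (\<lambda>p. op_mult s (e p) (a p h)) S') (X h j)) T"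
        by (rule osum_comp) (use fS' fT e(1) ca(3) in \<open>auto simp: ore_laurent\<close>)
      also have "\<dots> = osum (\<lambda>h. op_zero) T"
        by (rule osum_cong) (use e(3) in simp)
      finally show ?thesis by simp
    qed
    have "\<forall>p\<in>S'. op_mult s (e p) (c p) = op_zero"
      using S'(2) comb e(1) ca(1) unfolding indep_def2 by (elim allE[of _ "\<lambda>p. op_mult s (e p) (c p)"] impE) auto
    moreover obtain p1 where "p1 \<in> S'" "e p1 \<noteq> op_zero" using e(2) by blast
    ultimately show ?thesis
      using mult_nonzero(1)[OF ore_laurent ore_laurent, of "e p1" "c p1"] e(1) ca(1,2) by auto
  qed
qed

end




context aut begin

lemma indep_right_easy:
  assumes oX: "ore_mat X m k" and oQ: "ore_mat Q k n" and S: "S \<subseteq> {..<m}"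
    and ind: "left_lin_indep s (mat_mult s X Q k) S n"
  shows "left_lin_indep s X S k"
  unfolding indep_def2
proof (intro allI impI)
  fix u assume u: "(\<forall>i\<in>S. ore_op (u i)) \<and> (\<forall>j<k. osum (\<lambda>i. op_mult s (u i) (X i j)) S = op_zero)"
  have fS: "finite S" using S finite_subset by blast
  have "osum (\<lambda>i. op_mult s (u i) (mat_mult s X Q k i j)) S = op_zero" if j: "j < n" for j
  proof -
    have "osum (\<lambda>i. op_mult s (u i) (mat_mult s X Q k i j)) S
        = osum (\<lambda>h. op_mult s (osum (\<lambda>i. op_mult s (u i) (X i h)) S) (Q h j)) {..<k}"
      unfolding mm_eq by (rule osum_comp) (use fS u oX S in \<open>auto simp: ore_mat_def ore_laurent\<close>)
    also have "\<dots> = osum (\<lambda>h. op_zero) {..<k}" by (rule osum_cong) (use u in simp)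
    finally show ?thesis by simp
  qed
  then show "\<forall>i\<in>S. u i = op_zero" using ind u unfolding indep_def2 by blast
qed

lemma zero_rows_bound:
  assumes S: "S \<subseteq> {..<m}" and ind: "left_lin_indep s Y S n"
    and z: "\<And>i j. r \<le> i \<Longrightarrow> i < m \<Longrightarrow> j < n \<Longrightarrow> Y i j = op_zero"
  shows "card S \<le> r"
proof -
  have fS: "finite S" using S finite_subset by blast
  have "S \<subseteq> {..<r}"
  proof
    fix i assume i: "i \<in> S"
    show "i \<in> {..<r}"
    proof (rule ccontr)
      assume "i \<notin> {..<r}"
      then have ri: "r \<le> i" by simp
      have "osum (\<lambda>p. op_mult s (if p = i then op_one else op_zero) (Y p j)) S = op_zero" if "j < n" for j
      proof -
        have "osum (\<lambda>p. op_mult s (if p = i then op_one else op_zero) (Y p j)) S = osum (\<lambda>p. if p = i then Y p j else op_zero) S"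
          by (rule osum_cong) simp
        also have "\<dots> = Y i j" using fS i by (simp add: osum_delta)
        also have "\<dots> = op_zero" using z[OF ri _ that] i S by blast
        finally show ?thesis .
      qed
      then have "\<forall>p\<in>S. (if p = i then op_one else op_zero) = (op_zero :: 'k op)"
        using ind unfolding indep_def2 by (elim allE[of _ "\<lambda>p. if p = i then op_one else op_zero"] impE) auto
      then show False using i one_nz by fastforce
    qed
  qed
  then show ?thesis using card_mono[of "{..<r}" S] by simp
qed

lemma dmat_indep:
  assumes "r \<le> n" "\<forall>i<r. ore_op (d i) \<and> d i \<noteq> op_zero"
  shows "left_lin_indep s (dmat d r) {..<r} n"
  unfolding indep_def2
proof (intro allI impI ballI)
  fix u i assume u: "(\<forall>i\<in>{..<r}. ore_op (u i)) \<and> (\<forall>j<n. osum (\<lambda>i. op_mult s (u i) (dmat d r i j)) {..<r} = op_zero)"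
    and i: "i \<in> {..<r}"
  have "osum (\<lambda>p. op_mult s (u p) (dmat d r p i)) {..<r} = osum (\<lambda>p. if p = i then op_mult s (u p) (d p) else op_zero) {..<r}"
    by (rule osum_cong) (use i in \<open>auto simp: dmat_def\<close>)
  also have "\<dots> = op_mult s (u i) (d i)" using i by (simp add: osum_delta)
  finally have "op_mult s (u i) (d i) = op_zero" using u i assms(1) by auto
  then show "u i = op_zero"
    using mult_nonzero(1)[OF ore_laurent ore_laurent, of "u i" "d i"] u i assms(2) by auto
qed

lemma rank_transform:
  assumes oA: "ore_mat A m n" and uP: "ounimod P Pv m" and uQ: "ounimod Q Qv n"
    and eq: "mat_eq (mat_mult s (mat_mult s P A m) Q n) (dmat d r) m n"
    and r: "r \<le> m" "r \<le> n" and d: "\<forall>i<r. ore_op (d i) \<and> d i \<noteq> op_zero"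
  shows "op_rank s A m n = r"
proof -
  have oP: "ore_mat P m m" "ore_mat Pv m m" and oQ: "ore_mat Q n n" "ore_mat Qv n n"
    using uP uQ by (auto simp: ounimod_def)
  have lP: "laurent_mat P m m" "laurent_mat Pv m m" and lQ: "laurent_mat Q n n" "laurent_mat Qv n n"
    using oP oQ ore_laurent_mat by auto
  have lA: "laurent_mat A m n" using oA ore_laurent_mat by auto
  have oPA: "ore_mat (mat_mult s P A m) m n" using oP oA by (intro ore_mat_mult)
  have lPA: "laurent_mat (mat_mult s P A m) m n" using oPA ore_laurent_mat by auto
  have oD: "ore_mat (dmat d r) m n" using d by (auto simp: ore_mat_def dmat_def)
  let ?X = "mat_mult s (dmat d r) Qv n"
  have e2: "mat_eq ?X (mat_mult s P A m) m n"
  proof -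
    have a1: "mat_eq ?X (mat_mult s (mat_mult s (mat_mult s P A m) Q n) Qv n) m n"
      by (rule mat_mult_cong_left, rule mat_eq_sym, rule eq)
    have a2: "mat_eq (mat_mult s (mat_mult s (mat_mult s P A m) Q n) Qv n) (mat_mult s (mat_mult s P A m) (mat_mult s Q Qv n) n) m n"
      by (rule mat_assoc[OF lPA lQ(1)])
    have a3: "mat_eq (mat_mult s (mat_mult s P A m) (mat_mult s Q Qv n) n) (mat_mult s (mat_mult s P A m) mat_id n) m n"
      by (rule mat_mult_cong_right) (use uQ in \<open>simp add: ounimod_def is_inverse_def\<close>)
    have a4: "mat_eq (mat_mult s (mat_mult s P A m) mat_id n) (mat_mult s P A m) m n"
      by (rule mat_id_right[OF lPA])
    show ?thesis using a1 a2 a3 a4 by (meson mat_eq_trans)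
  qed
  have e3: "mat_eq A (mat_mult s Pv ?X m) m n"
  proof -
    have a1: "mat_eq (mat_mult s Pv ?X m) (mat_mult s Pv (mat_mult s P A m) m) m n"
      by (rule mat_mult_cong_right[OF e2])
    have a2: "mat_eq (mat_mult s Pv (mat_mult s P A m) m) (mat_mult s (mat_mult s Pv P m) A m) m n"
      by (rule mat_eq_sym, rule mat_assoc[OF lP(2) lP(1)])
    have a3: "mat_eq (mat_mult s (mat_mult s Pv P m) A m) (mat_mult s mat_id A m) m n"
      by (rule mat_mult_cong_left) (use uP in \<open>simp add: ounimod_def is_inverse_def\<close>)
    have a4: "mat_eq (mat_mult s mat_id A m) A m n" by (rule mat_id_left)
    show ?thesis using a1 a2 a3 a4 by (meson mat_eq_trans mat_eq_sym)
  qed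
  have oX: "ore_mat ?X m n" using oD oQ by (intro ore_mat_mult)
  have Xz: "?X i j = op_zero" if "r \<le> i" for i j
    unfolding mm_eq by (rule trans[OF osum_cong osum_const_zero]) (use that in \<open>simp add: dmat_def\<close>)
  have i1: "left_lin_indep s (dmat d r) {..<r} n" by (rule dmat_indep[OF r(2) d])
  have i2: "left_lin_indep s (mat_mult s (mat_mult s P A m) Q n) {..<r} n"
    using indep_cong[OF eq, of "{..<r}"] i1 r(1) by auto
  have i3: "left_lin_indep s (mat_mult s P A m) {..<r} n"
    by (rule indep_right_easy[OF oPA oQ(1) _ i2]) (use r in auto)
  obtain S0 where S0: "S0 \<subseteq> {..<m}" "left_lin_indep s A S0 n" "card S0 = card {..<r}"
    using span_indep[OF oA oP(1) mat_eq_refl _ i3] r(1) by auto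
  show ?thesis
  proof (rule rank_eqI[OF S0(1,2)])
    show "card S0 = r" using S0(3) by simp
  next
    fix S assume S: "S \<subseteq> {..<m}" "left_lin_indep s A S n"
    obtain S2 where S2: "S2 \<subseteq> {..<m}" "left_lin_indep s ?X S2 n" "card S2 = card S"
      using span_indep[OF oX oP(2) e3 S] by blast
    show "card S \<le> r" using zero_rows_bound[OF S2(1,2), of r] Xz S2(3) by auto
  qed
qed

end



definition diagm :: "(nat \<Rightarrow> 'k::zero op) \<Rightarrow> 'k opmat" where
  "diagm f = (\<lambda>i j. if i = j then f i else op_zero)"

lemma det_diag_coeff:
  fixes B :: "'k::field opmat"
  assumes "\<And>i j. i < r \<Longrightarrow> j < r \<Longrightarrow> B i j = (if i = j then F i else op_zero)" "\<And>i. i < r \<Longrightarrow> F i t \<noteq> 0"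
  shows "det (coeff_mat B r t) \<noteq> 0"
proof -
  let ?M = "coeff_mat B r t"
  have c: "?M \<in> carrier_mat r r" by (simp add: coeff_mat_def)
  have ut: "upper_triangular ?M"
    unfolding upper_triangular_def using assms(1) by (auto simp: coeff_mat_def)
  have "det ?M = prod_list (diag_mat ?M)" by (rule det_upper_triangular[OF ut c])
  also have "\<dots> \<noteq> 0"
    using assms by (auto simp: diag_mat_def coeff_mat_def prod_list_zero_iff)
  finally show ?thesis .
qed

context aut begin

lemma diagm_left: "i < m \<Longrightarrow> mat_mult s (diagm f) B m i j = op_mult s (f i) (B i j)"
proof -
  assume i: "i < m"
  have "mat_mult s (diagm f) B m i j = osum (\<lambda>h. if h = i then op_mult s (f h) (B h j) else op_zero) {..<m}"
    unfolding mm_eq by (rule osum_cong) (auto simp: diagm_def)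
  also have "\<dots> = op_mult s (f i) (B i j)" using i by (simp add: osum_delta)
  finally show ?thesis .
qed

lemma diagm_right: "j < n \<Longrightarrow> mat_mult s B (diagm f) n i j = op_mult s (B i j) (f j)"
proof -
  assume j: "j < n"
  have "mat_mult s B (diagm f) n i j = osum (\<lambda>h. if h = j then op_mult s (B i h) (f h) else op_zero) {..<n}"
    unfolding mm_eq by (rule osum_cong) (auto simp: diagm_def)
  also have "\<dots> = op_mult s (B i j) (f j)" using j by (simp add: osum_delta)
  finally show ?thesis .
qed

lemma lunimod_diagm:
  assumes "\<And>i. i < m \<Longrightarrow> laurent_op (f i) \<and> laurent_op (g i) \<and> op_mult s (f i) (g i) = op_one \<and> op_mult s (g i) (f i) = op_one"
  shows "lunimod (diagm f) (diagm g) m"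
proof -
  have "mat_eq (mat_mult s (diagm f) (diagm g) m) mat_id m m"
    unfolding mat_eq_def
  proof (intro allI impI)
    fix i j assume "i < m" "j < m"
    then show "mat_mult s (diagm f) (diagm g) m i j = mat_id i j"
      using diagm_left[of i m f "diagm g" j] assms by (auto simp: diagm_def mat_id_def)
  qed
  moreover have "mat_eq (mat_mult s (diagm g) (diagm f) m) mat_id m m"
    unfolding mat_eq_def
  proof (intro allI impI)
    fix i j assume "i < m" "j < m"
    then show "mat_mult s (diagm g) (diagm f) m i j = mat_id i j"
      using diagm_left[of i m g "diagm f" j] assms by (auto simp: diagm_def mat_id_def)
  qed
  moreover have "laurent_mat (diagm f) m m" "laurent_mat (diagm g) m m"
    using assms by (auto simp: laurent_mat_def diagm_def)
  ultimately show ?thesis by (simp add: lunimod_def is_inverse_def)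
qed

lemma mono_mult: "op_mult s (mono a k) (mono b l) = mono (a * sp k b) (k + l)"
  unfolding op_mult_mono_left by (rule ext) (auto simp: mono_def)

lemma mono_one: "mono 1 0 = op_one" by (rule ext) (simp add: mono_def op_one_def)

end

context aut begin

lemma construct:
  assumes oA: "ore_mat A m n"
  shows "\<exists>r P Pv Q Qv F l. r = op_rank s A m n \<and> r \<le> m \<and> r \<le> n \<and> lunimod P Pv m \<and> ounimod Q Qv n \<and> 0 \<le> l \<and>
     (\<forall>i<r. ore_op (F i) \<and> F i l \<noteq> 0 \<and> (\<forall>t>l. F i t = 0)) \<and>
     mat_eq (mat_mult s (mat_mult s P A m) Q n) (\<lambda>i j. if i < r \<and> j < r then diagm F i j else op_zero) m n"
proof -
  obtain P0 Pv0 Q Qv where u: "ounimod P0 Pv0 m" "ounimod Q Qv n"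
    and dp: "dprop m n (mat_mult s (mat_mult s P0 A m) Q n)"
    using diag_form[OF oA] unfolding reach_def by blast
  obtain r d where rd: "r \<le> m" "r \<le> n" "\<forall>i<r. ore_op (d i) \<and> d i \<noteq> op_zero"
    "mat_eq (mat_mult s (mat_mult s P0 A m) Q n) (dmat d r) m n"
    using dp unfolding dprop_def by blast
  have rank: "op_rank s A m n = r" by (rule rank_transform[OF oA u rd(4) rd(1,2,3)])
  define l where "l = Max (insert 0 ((\<lambda>i. deg (d i)) ` {..<r}))"
  have l0: "0 \<le> l" unfolding l_def by (simp add: Max_ge_iff)
  have dl: "deg (d i) \<le> l" if "i < r" for i unfolding l_def using that by (simp add: Max_ge_iff)
  define k where "k i = l - deg (d i)" for i
  define f where "f i = (if i < r then mono (1::'k) (k i) else op_one)" for i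
  define g where "g i = (if i < r then mono (1::'k) (- k i) else op_one)" for i
  have lf: "lunimod (diagm f) (diagm g) m"
    by (rule lunimod_diagm) (auto simp: f_def g_def mono_mult mono_one)
  define P where "P = mat_mult s (diagm f) P0 m"
  define Pv where "Pv = mat_mult s Pv0 (diagm g) m"
  have lP: "lunimod P Pv m" unfolding P_def Pv_def by (rule lunimod_mult[OF ounimod_lunimod[OF u(1)] lf])
  define F where "F i = op_mult s (mono (1::'k) (k i)) (d i)" for i
  have Fe: "F i t = sp (k i) (d i (t - k i))" for i t by (simp add: F_def op_mult_mono_left)
  have Fprops: "ore_op (F i) \<and> F i l \<noteq> 0 \<and> (\<forall>t>l. F i t = 0)" if i: "i < r" for i
  proof (intro conjI allI impI)
    have k0: "0 \<le> k i" using dl[OF i] by (simp add: k_def)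
    show "ore_op (F i)" unfolding F_def using rd(3) i k0 by (simp add: ore_mono)
    have dd: "d i (deg (d i)) \<noteq> 0" "\<And>t. d i t \<noteq> 0 \<Longrightarrow> t \<le> deg (d i)"
      using deg_props[OF ore_laurent] rd(3) i by auto
    show "F i l \<noteq> 0" using dd(1) by (simp add: Fe k_def)
    fix t assume "t > l"
    then have "d i (t - k i) = 0" using dd(2)[of "t - k i"] by (force simp: k_def)
    then show "F i t = 0" by (simp add: Fe)
  qed
  have ldf: "laurent_mat (diagm f) m m" using lf by (simp add: lunimod_def)
  have lP0: "laurent_mat P0 m m" using u(1) by (simp add: ounimod_def ore_laurent_mat)
  have lA: "laurent_mat A m n" using oA by (simp add: ore_laurent_mat)
  have lQ: "laurent_mat Q n n" using u(2) by (simp add: ounimod_def ore_laurent_mat)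
  have lP0A: "laurent_mat (mat_mult s P0 A m) m n" using lP0 lA laurent_mat_mult by blast
  have e1: "mat_eq (mat_mult s (mat_mult s P A m) Q n) (mat_mult s (mat_mult s (diagm f) (mat_mult s P0 A m) m) Q n) m n"
    unfolding P_def by (rule mat_mult_cong_left, rule mat_assoc[OF ldf lP0])
  have e2: "mat_eq (mat_mult s (mat_mult s (diagm f) (mat_mult s P0 A m) m) Q n) (mat_mult s (diagm f) (mat_mult s (mat_mult s P0 A m) Q n) m) m n"
    by (rule mat_assoc[OF ldf lP0A])
  have e3: "mat_eq (mat_mult s (diagm f) (mat_mult s (mat_mult s P0 A m) Q n) m) (mat_mult s (diagm f) (dmat d r) m) m n"
    by (rule mat_mult_cong_right[OF rd(4)])
  have e4: "mat_eq (mat_mult s (diagm f) (dmat d r) m) (\<lambda>i j. if i < r \<and> j < r then diagm F i j else op_zero) m n"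
    unfolding mat_eq_def
  proof (intro allI impI)
    fix i j assume ij: "i < m" "j < n"
    show "mat_mult s (diagm f) (dmat d r) m i j = (if i < r \<and> j < r then diagm F i j else op_zero)"
      using diagm_left[OF ij(1), of f "dmat d r" j] by (auto simp: dmat_def diagm_def F_def f_def)
  qed
  have "mat_eq (mat_mult s (mat_mult s P A m) Q n) (\<lambda>i j. if i < r \<and> j < r then diagm F i j else op_zero) m n"
    using e1 e2 e3 e4 by (meson mat_eq_trans)
  then show ?thesis using rank rd(1,2) lP u(2) l0 Fprops
    by (intro exI[of _ r] exI[of _ P] exI[of _ Pv] exI[of _ Q] exI[of _ Qv] exI[of _ F] exI[of _ l]) auto
qed

end


context aut begin

lemma block_apply:
  assumes "r \<le> n"
  shows "mat_apply s (\<lambda>i j. if i < r \<and> j < r then Ah i j else op_zero) n z i = (if i < r then mat_apply s Ah r z i else 0)"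
proof (cases "i < r")
  case True
  have "mat_apply s (\<lambda>i j. if i < r \<and> j < r then Ah i j else op_zero) n z i = (\<Sum>j<n. if j < r then op_apply s (Ah i j) (z j) else 0)"
    unfolding mat_apply_def by (rule sum.cong) (use True in auto)
  also have "\<dots> = (\<Sum>j<r. op_apply s (Ah i j) (z j))"
    by (rule sym, rule sum.mono_neutral_cong_left) (use assms in auto)
  finally show ?thesis using True by (simp add: mat_apply_def)
next
  case False
  then show ?thesis by (simp add: mat_apply_def)
qed

lemma solve_equiv:
  assumes oA: "ore_mat A m n" and lP: "lunimod P Pv m" and uQ: "ounimod Q Qv n" and r: "r \<le> m" "r \<le> n"
    and eq: "mat_eq (mat_mult s (mat_mult s P A m) Q n) (\<lambda>i j. if i < r \<and> j < r then Ah i j else op_zero) m n"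
  shows "(\<forall>i<m. mat_apply s A n y i = b i) \<longleftrightarrow>
         ((\<forall>i\<in>{r..<m}. mat_apply s P m b i = 0) \<and> (\<forall>i<r. mat_apply s Ah r (mat_apply s Qv n y) i = mat_apply s P m b i))"
proof -
  define z where "z = mat_apply s Qv n y"
  have lA: "laurent_mat A m n" using oA ore_laurent_mat by blast
  have lPP: "laurent_mat P m m" "laurent_mat Pv m m" "is_inverse s P Pv m" using lP by (auto simp: lunimod_def)
  have lQ: "laurent_mat Q n n" "laurent_mat Qv n n" using uQ by (auto simp: ounimod_def ore_laurent_mat)
  have iQ: "is_inverse s Q Qv n" using uQ by (simp add: ounimod_def)
  have lPA: "laurent_mat (mat_mult s P A m) m n" using lPP lA laurent_mat_mult by blast
  have yz: "mat_apply s Q n z j = y j" if "j < n" for j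
  proof -
    have "mat_apply s Q n z j = mat_apply s (mat_mult s Q Qv n) n y j"
      unfolding z_def by (rule mat_apply_mult[OF lQ that, symmetric])
    also have "\<dots> = mat_apply s mat_id n y j"
      by (rule mat_apply_cong_mat) (use iQ that in \<open>auto simp: is_inverse_def mat_eq_def\<close>)
    also have "\<dots> = y j" by (rule mat_apply_id[OF that])
    finally show ?thesis .
  qed
  have key: "mat_apply s P m (mat_apply s A n y) i = (if i < r then mat_apply s Ah r z i else 0)" if i: "i < m" for i
  proof -
    have "mat_apply s P m (mat_apply s A n y) i = mat_apply s (mat_mult s P A m) n y i"
      by (rule mat_apply_mult[OF lPP(1) lA i, symmetric])
    also have "\<dots> = mat_apply s (mat_mult s P A m) n (mat_apply s Q n z) i"
      by (rule mat_apply_cong) (use yz in auto)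
    also have "\<dots> = mat_apply s (mat_mult s (mat_mult s P A m) Q n) n z i"
      by (rule mat_apply_mult[OF lPA lQ(1) i, symmetric])
    also have "\<dots> = mat_apply s (\<lambda>i j. if i < r \<and> j < r then Ah i j else op_zero) n z i"
      by (rule mat_apply_cong_mat) (use eq i in \<open>auto simp: mat_eq_def\<close>)
    also have "\<dots> = (if i < r then mat_apply s Ah r z i else 0)" by (rule block_apply[OF r(2)])
    finally show ?thesis .
  qed
  have inj: "x i = x' i" if h: "\<And>i. i < m \<Longrightarrow> mat_apply s P m x i = mat_apply s P m x' i" and i: "i < m" for x x' i
  proof -
    have bk: "mat_apply s Pv m (mat_apply s P m w) i = w i" for w
    proof -
      have "mat_apply s Pv m (mat_apply s P m w) i = mat_apply s (mat_mult s Pv P m) m w i"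
        by (rule mat_apply_mult[OF lPP(2) lPP(1) i, symmetric])
      also have "\<dots> = mat_apply s mat_id m w i"
        by (rule mat_apply_cong_mat) (use lPP(3) i in \<open>auto simp: is_inverse_def mat_eq_def\<close>)
      also have "\<dots> = w i" by (rule mat_apply_id[OF i])
      finally show ?thesis .
    qed
    have "mat_apply s Pv m (mat_apply s P m x) i = mat_apply s Pv m (mat_apply s P m x') i"
      by (rule mat_apply_cong) (use h in auto)
    then show ?thesis using bk by simp
  qed
  show ?thesis
  proof
    assume sol: "\<forall>i<m. mat_apply s A n y i = b i"
    have "mat_apply s P m (mat_apply s A n y) i = mat_apply s P m b i" for i
      by (rule mat_apply_cong) (use sol in auto)
    then show "(\<forall>i\<in>{r..<m}. mat_apply s P m b i = 0) \<and> (\<forall>i<r. mat_apply s Ah r (mat_apply s Qv n y) i = mat_apply s P m b i)"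
      using key r unfolding z_def by (metis atLeastLessThan_iff not_less order_less_le_trans)
  next
    assume rhs: "(\<forall>i\<in>{r..<m}. mat_apply s P m b i = 0) \<and> (\<forall>i<r. mat_apply s Ah r (mat_apply s Qv n y) i = mat_apply s P m b i)"
    have "mat_apply s P m (mat_apply s A n y) i = mat_apply s P m b i" if "i < m" for i
      using key[OF that] rhs that unfolding z_def by (cases "i < r") auto
    then show "\<forall>i<m. mat_apply s A n y i = b i" using inj by blast
  qed
qed

end




context aut begin

lemma regular:
  assumes l0: "0 \<le> l" and F: "\<forall>i<r. ore_op (F i) \<and> F i l \<noteq> 0 \<and> (\<forall>t>l. F i t = 0)" and c: "c \<noteq> 0"
  shows "ore_mat (\<lambda>i j t. c * diagm F i j t) r r \<and> head_regular (\<lambda>i j t. c * diagm F i j t) r \<and>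
    (\<exists>W. unimodular_laurent s W r \<and> ore_mat (mat_mult s W (\<lambda>i j t. c * diagm F i j t) r) r r \<and>
         tail_regular (mat_mult s W (\<lambda>i j t. c * diagm F i j t) r) r)"
proof -
  let ?B = "\<lambda>i j t. c * diagm F i j t"
  define G where "G i = (\<lambda>t. c * F i t)" for i
  have Bd: "?B i j = (if i = j then G i else op_zero)" for i j
    by (rule ext) (simp add: diagm_def G_def)
  have oF: "ore_op (F i)" and Fl: "F i l \<noteq> 0" and Fa: "\<And>t. t > l \<Longrightarrow> F i t = 0" if "i < r" for i
    using F that by auto
  have oG: "ore_op (G i)" if "i < r" for i
  proof -
    have "op_supp (G i) = op_supp (F i)" using c by (auto simp: op_supp_def G_def)
    then show ?thesis using oF[OF that] by (simp add: ore_op_def laurent_op_def G_def)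
  qed
  have oB: "ore_mat ?B r r" using oG by (auto simp: ore_mat_def Bd)
  have hr: "head_regular ?B r"
  proof (cases "r = 0")
    case True
    then show ?thesis unfolding head_regular_def
      by (intro det_diag_coeff[where F = G]) (auto simp: Bd)
  next
    case False
    let ?S = "{t. \<exists>j<r. \<exists>k<r. ?B j k t \<noteq> 0} \<union> {0}"
    have sub: "?S \<subseteq> {0..l}"
    proof
      fix t assume "t \<in> ?S"
      then consider "t = 0" | j where "j < r" "G j t \<noteq> 0" by (auto simp: diagm_def G_def split: if_splits)
      then show "t \<in> {0..l}"
      proof cases
        case 1 then show ?thesis using l0 by simp
      next
        case 2
        then have "F j t \<noteq> 0" by (simp add: G_def)
        then have "t \<le> l" "0 \<le> t" using Fa[OF 2(1)] ore_neg[OF oF[OF 2(1)]] by (meson not_le)+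
        then show ?thesis by simp
      qed
    qed
    have "?B 0 0 l \<noteq> 0" using False Fl[of 0] c by (simp add: diagm_def)
    then have lin: "l \<in> ?S" using False by blast
    have fin: "finite ?S" by (rule finite_subset[OF sub]) simp
    have "Max ?S = l"
    proof (rule Max_eqI[OF fin])
      fix y assume "y \<in> ?S"
      with sub have "y \<in> {0..l}" by (rule subsetD)
      then show "y \<le> l" by simp
    next
      show "l \<in> ?S" by (rule lin)
    qed
    then have "op_mat_order ?B r = l" unfolding op_mat_order_def .
    then show ?thesis unfolding head_regular_def
      by (intro det_diag_coeff[where F = G]) (auto simp: Bd G_def Fl c)
  qed
  define lo where "lo i = Min (op_supp (F i))" for i
  have lo: "F i (lo i) \<noteq> 0" "\<And>t. t < lo i \<Longrightarrow> F i t = 0" if "i < r" for i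
  proof -
    have fin: "finite (op_supp (F i))" using oF[OF that] by (simp add: ore_op_def laurent_op_def)
    have ne: "op_supp (F i) \<noteq> {}" using Fl[OF that] by (auto simp: op_supp_def)
    show "F i (lo i) \<noteq> 0" using Min_in[OF fin ne] by (simp add: lo_def op_supp_def)
    fix t assume "t < lo i"
    then show "F i t = 0" using Min_le[OF fin, of t] by (force simp: lo_def op_supp_def)
  qed
  define w where "w i = mono (1::'k) (- lo i)" for i
  define wv where "wv i = mono (1::'k) (lo i)" for i
  have lW: "lunimod (diagm w) (diagm wv) r"
    by (rule lunimod_diagm) (auto simp: w_def wv_def mono_mult mono_one)
  define H where "H i = (\<lambda>t. sp (- lo i) (G i (t + lo i)))" for i
  have WB: "mat_mult s (diagm w) ?B r i j = (if i = j then H i else op_zero)" if "i < r" for i j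
    using diagm_left[OF that, of w ?B j]
    by (auto simp: Bd w_def op_mult_mono_left H_def intro!: ext)
  have oH: "ore_op (H i)" if i: "i < r" for i
  proof -
    have "H i t = 0" if "t < 0" for t using lo(2)[OF i, of "t + lo i"] that by (simp add: H_def G_def)
    moreover have "op_supp (H i) \<subseteq> (\<lambda>t. t - lo i) ` op_supp (G i)"
    proof
      fix t assume "t \<in> op_supp (H i)"
      then have "t + lo i \<in> op_supp (G i)" by (simp add: op_supp_def H_def)
      then show "t \<in> (\<lambda>t. t - lo i) ` op_supp (G i)" by force
    qed
    then have "finite (op_supp (H i))" using oG[OF i] by (meson finite_imageI finite_subset laurent_op_def ore_op_def)
    ultimately show ?thesis by (simp add: ore_op_def laurent_op_def)
  qed
  have H0: "H i 0 \<noteq> 0" if "i < r" for i using lo(1)[OF that] c by (simp add: H_def G_def)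
  have oWB: "ore_mat (mat_mult s (diagm w) ?B r) r r" using oH by (auto simp: ore_mat_def WB)
  have tr: "tail_regular (mat_mult s (diagm w) ?B r) r"
    unfolding tail_regular_def by (intro det_diag_coeff[where F = H]) (auto simp: WB H0)
  have "unimodular_laurent s (diagm w) r" by (rule lunimod_unimodular[OF lW])
  then show ?thesis using oB hr oWB tr by blast
qed

end

lemma embP_mult: "embP p * embP q = embP (p * q)" by (simp add: embP_def)
lemma embP_zero: "embP 0 = 0" by (simp add: embP_def Zero_fract_def[symmetric])
lemma embP_eq0: "embP p = 0 \<longleftrightarrow> p = 0"
proof -
  have "Fract p 1 = Fract 0 1 \<longleftrightarrow> p = 0" by (simp add: eq_fract)
  then show ?thesis by (simp add: embP_def Zero_fract_def[symmetric])
qed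

lemma clear_one: "\<exists>q. q \<noteq> 0 \<and> embP q * (x::'a::field poly fract) \<in> range embP"
proof (cases x rule: Fract_cases)
  case (Fract a b)
  have "embP b * x = Fract (b * a) (b * 1)" by (simp add: embP_def Fract)
  also have "\<dots> = embP a" using mult_fract_cancel[OF Fract(2), of a 1] by (simp add: embP_def)
  finally show ?thesis using Fract(2) by blast
qed

lemma clear_fin:
  assumes "finite X"
  shows "\<exists>q. q \<noteq> 0 \<and> (\<forall>x\<in>X. embP q * (x::'a::field poly fract) \<in> range embP)"
  using assms
proof (induction X rule: finite_induct)
  case empty
  show ?case by (rule exI[of _ 1]) simp
next
  case (insert x X)
  from insert.IH obtain q where q: "q \<noteq> 0" "\<forall>y\<in>X. embP q * y \<in> range embP" by (elim exE conjE)
  from clear_one[of x] obtain q' where q': "q' \<noteq> 0" "embP q' * x \<in> range embP" by (elim exE conjE)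
  have h: "embP (q * q') * y \<in> range embP" if y: "y \<in> insert x X" for y
  proof (cases "y = x")
    case True
    from q'(2) obtain a where a: "embP q' * x = embP a" by (meson rangeE)
    have "embP (q * q') * y = embP q * (embP q' * x)" using True unfolding embP_mult[symmetric] by (simp only: mult.assoc)
    also have "\<dots> = embP (q * a)" unfolding a by (rule embP_mult)
    finally show ?thesis by (simp only:) (rule rangeI)
  next
    case False
    then have "y \<in> X" using y by simp
    with q(2) have "embP q * y \<in> range embP" by (rule bspec)
    then obtain a where a: "embP q * y = embP a" by (meson rangeE)
    have "embP (q * q') * y = embP q' * (embP q * y)" unfolding embP_mult[symmetric] by (simp only: mult.assoc mult.left_commute[of "embP q"])
    also have "\<dots> = embP (q' * a)" unfolding a by (rule embP_mult)
    finally show ?thesis by (simp only:) (rule rangeI)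
  qed
  have nz: "q * q' \<noteq> 0" using q(1) q'(1) by simp
  show ?case by (rule exI[of _ "q * q'"], rule conjI[OF nz]) (use h in blast)
qed

theorem theorem5:
  fixes s0 :: "'a::field_char_0 \<Rightarrow> 'a" and s :: "'a poly fract \<Rightarrow> 'a poly fract"
    and A :: "'a poly fract opmat" and b :: "nat \<Rightarrow> 'a poly fract" and m n :: nat
  assumes "PiSigma_ext s0 s" and "ore_mat A m n"
  shows "\<exists>r P Q Qi Ahat.
     r = op_rank s A m n \<and> r \<le> m \<and> r \<le> n \<and>
     unimodular_laurent s P m \<and>
     ore_mat Q n n \<and> ore_mat Qi n n \<and> is_inverse s Q Qi n \<and>
     ore_mat Ahat r r \<and>
     mat_eq (mat_mult s (mat_mult s P A m) Q n)
            (\<lambda>i j. if i < r \<and> j < r then Ahat i j else op_zero) m n \<and>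
     (\<forall>y. (\<forall>i<m. mat_apply s A n y i = b i) \<longleftrightarrow>
          ((\<forall>i\<in>{r..<m}. mat_apply s P m b i = 0) \<and>
           (\<forall>i<r. mat_apply s Ahat r (mat_apply s Qi n y) i = mat_apply s P m b i))) \<and>
     (\<exists>p. p \<noteq> 0 \<and>
        poly_coeff_mat (\<lambda>i j k. embP p * Ahat i j k) r \<and>
        (\<forall>i<r. embP p * mat_apply s P m b i \<in> range embP) \<and>
        fully_regular s (\<lambda>i j k. embP p * Ahat i j k) (\<lambda>i. embP p * mat_apply s P m b i) r)"
proof -
  have "is_automorphism s" using assms(1) by (simp add: PiSigma_ext_def)
  then interpret aut s by unfold_locales
  obtain r P Pv Q Qv F l where c: "r = op_rank s A m n" "r \<le> m" "r \<le> n" "lunimod P Pv m" "ounimod Q Qv n" "0 \<le> l"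
    "\<forall>i<r. ore_op (F i) \<and> F i l \<noteq> 0 \<and> (\<forall>t>l. F i t = 0)"
    "mat_eq (mat_mult s (mat_mult s P A m) Q n) (\<lambda>i j. if i < r \<and> j < r then diagm F i j else op_zero) m n"
    using construct[OF assms(2)] by blast
  let ?Ah = "diagm F"
  have oAh: "ore_mat ?Ah r r" using c(7) by (auto simp: ore_mat_def diagm_def)
  have eqv: "\<forall>y. (\<forall>i<m. mat_apply s A n y i = b i) \<longleftrightarrow>
          ((\<forall>i\<in>{r..<m}. mat_apply s P m b i = 0) \<and>
           (\<forall>i<r. mat_apply s ?Ah r (mat_apply s Qv n y) i = mat_apply s P m b i))"
    using solve_equiv[OF assms(2) c(4) c(5) c(2) c(3) c(8)] by blast
  define X where "X = (\<Union>i<r. F i ` op_supp (F i)) \<union> (\<lambda>i. mat_apply s P m b i) ` {..<r}"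
  have fX: "finite X" unfolding X_def using c(7) by (auto simp: ore_op_def laurent_op_def)
  obtain p where p: "p \<noteq> 0" "\<forall>x\<in>X. embP p * x \<in> range embP" using clear_fin[OF fX] by blast
  have cnz: "embP p \<noteq> 0" using p(1) embP_eq0 by blast
  have coef: "embP p * ?Ah i j k \<in> range embP" if "i < r" "j < r" for i j k
  proof (cases "i = j \<and> F i k \<noteq> 0")
    case True
    then have "F i k \<in> X" using that by (auto simp: X_def op_supp_def)
    then show ?thesis using p(2) True by (simp add: diagm_def)
  next
    case False
    then have "?Ah i j k = 0" by (auto simp: diagm_def)
    then show ?thesis using embP_zero by (metis mult_zero_right rangeI)
  qed
  have rhs: "\<forall>i<r. embP p * mat_apply s P m b i \<in> range embP" using p(2) by (auto simp: X_def)
  have reg: "ore_mat (\<lambda>i j t. embP p * ?Ah i j t) r r \<and> head_regular (\<lambda>i j t. embP p * ?Ah i j t) r \<and>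
    (\<exists>W. unimodular_laurent s W r \<and> ore_mat (mat_mult s W (\<lambda>i j t. embP p * ?Ah i j t) r) r r \<and>
         tail_regular (mat_mult s W (\<lambda>i j t. embP p * ?Ah i j t) r) r)"
    by (rule regular[OF c(6) c(7) cnz])
  have pc: "poly_coeff_mat (\<lambda>i j k. embP p * ?Ah i j k) r"
    unfolding poly_coeff_mat_def using reg coef by blast
  have fr: "fully_regular s (\<lambda>i j k. embP p * ?Ah i j k) (\<lambda>i. embP p * mat_apply s P m b i) r"
    unfolding fully_regular_def using pc reg by blast
  have uP: "unimodular_laurent s P m" by (rule lunimod_unimodular[OF c(4)])
  have uQ: "ore_mat Q n n" "ore_mat Qv n n" "is_inverse s Q Qv n" using c(5) by (auto simp: ounimod_def)
  show ?thesis
    apply (rule exI[of _ r], rule exI[of _ P], rule exI[of _ Q], rule exI[of _ Qv], rule exI[of _ ?Ah])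
    apply (intro conjI)
              apply (fact c(1))
             apply (fact c(2))
            apply (fact c(3))
           apply (fact uP)
          apply (fact uQ(1))
         apply (fact uQ(2))
        apply (fact uQ(3))
       apply (fact oAh)
      apply (fact c(8))
     apply (fact eqv)
    apply (rule exI[of _ p], intro conjI)
       apply (fact p(1))
      apply (fact pc)
     apply (fact rhs)
    apply (fact fr)
    done
qed



end
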